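(* Let $v=\frac1{t_0}\int_0^{t_0}p_s\tilde u\,ds$ with $\tilde u=p_\eta u$, $u\in D$, $\eta\ge0$, $t_0>0$. For $\varepsilon>0$ let $v_\varepsilon=v+\varepsilon$ and $$V_\varepsilon=\frac{1}{v_\varepsilon}\cdot\frac{p_{t_0}\tilde u-\tilde u}{t_0}.$$ Then for all $t>0$ and $x\in E$, $$v_\varepsilon(x)=E^x\Big\{v_\varepsilon(X_t)\exp\Big(-\int_0^tV_\varepsilon(X_s)\,ds\Big)\Big\}.$$
   Context: $(E,\mathcal B(E),m)$ is a $\sigma$-finite measure space with $E$ a topological Lusin space. $p_t(x,\cdot)$, $t\ge0$, is a transition probability function on $E$ (probability measures, jointly measurable in $(t,x)$, $p_0(x,A)=1_A(x)$); $p_tf(x)=\int f\,dp_t(x,\cdot)$. There is a progressively measurable Markov process $(\Omega,\mathcal F^o_t,X_t,P^x)_{x\in E}$ with transition function $p_t$, $P^x(X_0=x)=1$, infinite lifetime; $E^x$ is expectation under $P^x$. $D=\{u\text{ bounded measurable},u\ge0,\int u\,dm<\infty\}$. *)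

theory Defs
  imports "HOL-Analysis.Analysis" "HOL-Probability.Probability"
begin

text \<open>Lusin space: a Hausdorff space which is the image of a Polish space under a
continuous bijection.  Every Polish space is homeomorphic to a closed subset of
the Polish space nat => real (product topology), so we quantify over such subsets.\<close>
definition lusin_space :: "'a::topological_space itself \<Rightarrow> bool" where
  "lusin_space _ \<longleftrightarrow> Hausdorff_space (euclidean :: 'a topology) \<and>
     (\<exists>(S :: (nat \<Rightarrow> real) set) (f :: (nat \<Rightarrow> real) \<Rightarrow> 'a).
        closed S \<and> continuous_on S f \<and> bij_betw f S UNIV)"

definition transition_function :: "(real \<Rightarrow> 'a::topological_space \<Rightarrow> 'a measure) \<Rightarrow> bool" where
  "transition_function p \<longleftrightarrow>
     (\<forall>t\<ge>0. \<forall>x. prob_space (p t x) \<and> sets (p t x) = sets borel) \<and>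
     (\<forall>A\<in>sets borel. (\<lambda>(t, x). measure (p t x) A)
         \<in> borel_measurable (restrict_space borel {0..} \<Otimes>\<^sub>M borel)) \<and>
     (\<forall>x. p 0 x = return borel x) \<and>
     (\<forall>s\<ge>0. \<forall>t\<ge>0. \<forall>x. \<forall>A\<in>sets borel.
         measure (p (s + t) x) A = (\<integral>y. measure (p t y) A \<partial>p s x))"

definition ptf :: "(real \<Rightarrow> 'a \<Rightarrow> 'a measure) \<Rightarrow> real \<Rightarrow> ('a \<Rightarrow> real) \<Rightarrow> 'a \<Rightarrow> real" where
  "ptf p t f x = (\<integral>y. f y \<partial>p t x)"

definition markov_process ::
  "(real \<Rightarrow> 'a::topological_space \<Rightarrow> 'a measure) \<Rightarrow> 'w set \<Rightarrow> (real \<Rightarrow> 'w measure)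
     \<Rightarrow> (real \<Rightarrow> 'w \<Rightarrow> 'a) \<Rightarrow> ('a \<Rightarrow> 'w measure) \<Rightarrow> bool" where
  "markov_process p \<Omega> F X P \<longleftrightarrow>
     (\<forall>x. prob_space (P x) \<and> space (P x) = \<Omega>) \<and>
     (\<forall>t\<ge>0. space (F t) = \<Omega> \<and> (\<forall>x. sets (F t) \<subseteq> sets (P x))) \<and>
     (\<forall>s t. 0 \<le> s \<longrightarrow> s \<le> t \<longrightarrow> sets (F s) \<subseteq> sets (F t)) \<and>
     (\<forall>t\<ge>0. (\<lambda>(s, \<omega>). X s \<omega>) \<in> measurable (restrict_space borel {0..t} \<Otimes>\<^sub>M F t) borel) \<and>
     (\<forall>x. AE \<omega> in P x. X 0 \<omega> = x) \<and>
     (\<forall>x. \<forall>s\<ge>0. \<forall>t\<ge>0. \<forall>A\<in>sets borel. \<forall>B\<in>sets (F t).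
        measure (P x) (B \<inter> {\<omega>\<in>\<Omega>. X (t + s) \<omega> \<in> A})
          = (\<integral>\<omega>. indicator B \<omega> * measure (p s (X t \<omega>)) A \<partial>P x))"

definition Dset :: "'a::topological_space measure \<Rightarrow> ('a \<Rightarrow> real) set" where
  "Dset m = {u. u \<in> borel_measurable borel \<and> bounded (range u) \<and> (\<forall>x. 0 \<le> u x) \<and>
               (\<integral>\<^sup>+x. ennreal (u x) \<partial>m) < \<infinity>}"

end

theory Submission
  imports Defs
begin

lemma int_set:
  fixes f :: "real \<Rightarrow> real"
  assumes S: "S \<in> sets borel" "S \<subseteq> {c..d}" and f: "f \<in> borel_measurable borel" and b: "\<And>s. s \<in> S \<Longrightarrow> \<bar>f s\<bar> \<le> B"
  shows "integrable lborel (\<lambda>s. indicator S s * f s)"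
proof -
  have "emeasure lborel S \<le> emeasure lborel {c..d}" using S by (intro emeasure_mono) auto
  also have "\<dots> < \<infinity>" by (simp add: emeasure_lborel_Icc_eq)
  finally show ?thesis
    using integrableI_bounded_set_indicator[of S lborel f B] S f b by simp
qed

lemma ind_meas: "(\<lambda>(r, x). indicator {0..r} x * h x) \<in> borel_measurable (borel \<Otimes>\<^sub>M borel)"
  if "h \<in> borel_measurable borel" for h :: "real \<Rightarrow> real"
proof -
  have "(\<lambda>(r::real, x::real). (if 0 \<le> x \<and> x \<le> r then 1 else 0) * h x) \<in> borel_measurable (borel \<Otimes>\<^sub>M borel)"
    using that by measurable
  then show ?thesis by (simp add: indicator_def split_beta' of_bool_def)
qed

lemma Aint_meas:
  fixes h :: "real \<Rightarrow> real"
  assumes "h \<in> borel_measurable borel"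
  shows "(\<lambda>r. \<integral>x. indicator {0..r} x * h x \<partial>lborel) \<in> borel_measurable borel"
proof -
  have "(\<lambda>(r, x). indicator {0..r} x * h x) \<in> borel_measurable (borel \<Otimes>\<^sub>M lborel)"
    using ind_meas[OF assms] by (simp cong: measurable_cong_sets)
  from lborel.borel_measurable_lebesgue_integral[OF this] show ?thesis by simp
qed

lemma Abound:
  fixes h :: "real \<Rightarrow> real"
  assumes h: "h \<in> borel_measurable borel" and r: "0 \<le> r" and b: "\<And>x. x \<in> {0..r} \<Longrightarrow> \<bar>h x\<bar> \<le> B"
  shows "\<bar>\<integral>x. indicator {0..r} x * h x \<partial>lborel\<bar> \<le> B * r"
proof -
  have i1: "integrable lborel (\<lambda>x. indicator {0..r} x * \<bar>h x\<bar>)"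
    using h b by (intro int_set[where c=0 and d=r and B=B]) auto
  have i2: "integrable lborel (\<lambda>x. indicator {0..r} x * B)"
    by (intro int_set[where c=0 and d=r and B="\<bar>B\<bar>"]) auto
  have "\<bar>\<integral>x. indicator {0..r} x * h x \<partial>lborel\<bar> \<le> (\<integral>x. \<bar>indicator {0..r} x * h x\<bar> \<partial>lborel)"
    by (rule integral_abs_bound)
  also have "\<dots> = (\<integral>x. indicator {0..r} x * \<bar>h x\<bar> \<partial>lborel)" by (simp add: abs_mult)
  also have "\<dots> \<le> (\<integral>x. indicator {0..r} x * B \<partial>lborel)"
    using i1 i2 b by (intro integral_mono) (auto simp: indicator_def)
  also have "\<dots> = B * r" using r by (simp add: mult.commute)
  finally show ?thesis .
qed

lemma fubini_ll:
  fixes f :: "real \<times> real \<Rightarrow> real"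
  assumes f: "f \<in> borel_measurable (lborel \<Otimes>\<^sub>M lborel)"
    and B: "\<And>x y. \<bar>f (x, y)\<bar> \<le> B" and z: "\<And>x y. (x, y) \<notin> {c..d} \<times> {c..d} \<Longrightarrow> f (x, y) = 0"
  shows "(\<integral>x. (\<integral>y. f (x, y) \<partial>lborel) \<partial>lborel) = (\<integral>y. (\<integral>x. f (x, y) \<partial>lborel) \<partial>lborel)"
proof -
  have "integrable (lborel \<Otimes>\<^sub>M lborel) f"
  proof (rule integrableI_bounded_set[where A="{c..d} \<times> {c..d}" and B=B])
    show "{c..d} \<times> {c..d} \<in> sets (lborel \<Otimes>\<^sub>M lborel)" by (intro pair_measureI) auto
    have "emeasure (lborel \<Otimes>\<^sub>M lborel) ({c..d} \<times> {c..d}) = emeasure lborel {c..d} * emeasure lborel {c..d}"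
      by (intro lborel.emeasure_pair_measure_Times) auto
    also have "\<dots> < \<infinity>" by (simp add: emeasure_lborel_Icc_eq ennreal_mult_less_top)
    finally show "emeasure (lborel \<Otimes>\<^sub>M lborel) ({c..d} \<times> {c..d}) < \<infinity>" .
    show "AE x\<in>{c..d} \<times> {c..d} in lborel \<Otimes>\<^sub>M lborel. norm (f x) \<le> B"
      using B by (intro AE_I2) (metis prod.collapse real_norm_def)
    show "AE x in lborel \<Otimes>\<^sub>M lborel. x \<notin> {c..d} \<times> {c..d} \<longrightarrow> f x = 0"
      using z by (intro AE_I2) (metis prod.collapse)
  qed (rule f)
  then have "integrable (lborel \<Otimes>\<^sub>M lborel) (\<lambda>(x, y). f (x, y))" by simp
  from lborel_pair.Fubini_integral[OF this] show ?thesis by simp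
qed


lemma abs_mult_bound: "\<bar>x\<bar> \<le> a \<Longrightarrow> \<bar>y\<bar> \<le> b \<Longrightarrow> \<bar>x * y\<bar> \<le> a * (b::real)"
  by (simp add: abs_mult mult_mono')

lemma ind_halfopen:
  fixes h :: "real \<Rightarrow> real"
  assumes "h \<in> borel_measurable borel"
  shows "(\<integral>a. indicator {0..<b} a * h a \<partial>lborel) = (\<integral>a. indicator {0..b} a * h a \<partial>lborel)"
proof (rule integral_cong_AE)
  have N: "AE a in lborel. a \<notin> {b}" by (rule AE_not_in[OF finite_imp_null_set_lborel]) simp
  show "AE a in lborel. indicator {0..<b} a * h a = indicator {0..b} a * h a"
    by (rule AE_mp[OF N]) (auto simp: indicator_def)
qed (use assms in auto)

lemma ibp:
  fixes h k :: "real \<Rightarrow> real"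
  assumes h: "h \<in> borel_measurable borel" and k: "k \<in> borel_measurable borel"
    and hb: "\<And>x. x \<in> {0..s} \<Longrightarrow> \<bar>h x\<bar> \<le> Bh" and kb: "\<And>x. x \<in> {0..s} \<Longrightarrow> \<bar>k x\<bar> \<le> Bk" and s: "0 \<le> s"
  shows "(\<integral>x. indicator {0..s} x * h x \<partial>lborel) * (\<integral>x. indicator {0..s} x * k x \<partial>lborel)
    = (\<integral>r. indicator {0..s} r * (h r * (\<integral>x. indicator {0..r} x * k x \<partial>lborel) + k r * (\<integral>x. indicator {0..r} x * h x \<partial>lborel)) \<partial>lborel)"
proof -
  define A where "A r = (\<integral>x. indicator {0..r} x * h x \<partial>lborel)" for r
  define K where "K r = (\<integral>x. indicator {0..r} x * k x \<partial>lborel)" for r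
  have Am: "A \<in> borel_measurable borel" unfolding A_def by (rule Aint_meas[OF h])
  have Km: "K \<in> borel_measurable borel" unfolding K_def by (rule Aint_meas[OF k])
  have Bh0: "0 \<le> Bh" using hb[of 0] s by auto
  have Bk0: "0 \<le> Bk" using kb[of 0] s by auto
  have Ab: "\<bar>A r\<bar> \<le> Bh * s" if "r \<in> {0..s}" for r
  proof -
    have "\<bar>A r\<bar> \<le> Bh * r" unfolding A_def using that hb by (intro Abound[OF h]) auto
    also have "\<dots> \<le> Bh * s" using that Bh0 by (intro mult_left_mono) auto
    finally show ?thesis .
  qed
  have Kb: "\<bar>K r\<bar> \<le> Bk * s" if "r \<in> {0..s}" for r
  proof -
    have "\<bar>K r\<bar> \<le> Bk * r" unfolding K_def using that kb by (intro Abound[OF k]) auto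
    also have "\<dots> \<le> Bk * s" using that Bk0 by (intro mult_left_mono) auto
    finally show ?thesis .
  qed
  define J where "J a = (\<integral>b. indicator {a<..s} b * k b \<partial>lborel)" for a
  have split: "K s = K a + J a" if a: "a \<in> {0..s}" for a
  proof -
    have "K s = (\<integral>b. indicator {0..a} b * k b + indicator {a<..s} b * k b \<partial>lborel)"
      unfolding K_def using a by (intro Bochner_Integration.integral_cong) (auto simp: indicator_def)
    also have "\<dots> = K a + J a" unfolding K_def J_def
      using a kb by (intro Bochner_Integration.integral_add int_set[OF _ _ k, where c=0 and d=s and B=Bk]) auto
    finally show ?thesis .
  qed
  have "A s * K s = (\<integral>a. indicator {0..s} a * h a * K s \<partial>lborel)"
    unfolding A_def by simp
  also have "\<dots> = (\<integral>a. indicator {0..s} a * h a * K a + indicator {0..s} a * h a * (K s - K a) \<partial>lborel)"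
    by (intro Bochner_Integration.integral_cong) (auto simp: algebra_simps)
  also have "\<dots> = (\<integral>a. indicator {0..s} a * h a * K a \<partial>lborel) + (\<integral>a. indicator {0..s} a * h a * (K s - K a) \<partial>lborel)"
  proof (intro Bochner_Integration.integral_add)
    show "integrable lborel (\<lambda>a. indicator {0..s} a * h a * K a)"
      using int_set[of "{0..s}" 0 s "\<lambda>a. h a * K a" "Bh * (Bk * s)"] h Km hb Kb
      by (auto simp: mult.assoc intro!: abs_mult_bound)
    show "integrable lborel (\<lambda>a. indicator {0..s} a * h a * (K s - K a))"
    proof -
      have "\<bar>K s - K a\<bar> \<le> 2 * (Bk * s)" if "a \<in> {0..s}" for a
        using Kb[of s] Kb[of a] that s by (auto simp: abs_le_iff)
      then show ?thesis
        using int_set[of "{0..s}" 0 s "\<lambda>a. h a * (K s - K a)" "Bh * (2 * (Bk * s))"] h Km hb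
        by (auto simp: mult.assoc intro!: abs_mult_bound)
    qed
  qed
  also have "(\<integral>a. indicator {0..s} a * h a * (K s - K a) \<partial>lborel) = (\<integral>a. indicator {0..s} a * h a * J a \<partial>lborel)"
    using split by (intro Bochner_Integration.integral_cong) (auto simp: indicator_def)
  also have "\<dots> = (\<integral>a. (\<integral>b. indicator {0..s} a * h a * (indicator {a<..s} b * k b) \<partial>lborel) \<partial>lborel)"
    unfolding J_def by simp
  also have "\<dots> = (\<integral>b. (\<integral>a. indicator {0..s} a * h a * (indicator {a<..s} b * k b) \<partial>lborel) \<partial>lborel)"
  proof -
    let ?F = "\<lambda>(a, b). indicator {0..s} a * h a * (indicator {a<..s} b * k b)"
    have "(\<lambda>(a::real, b::real). (if 0 \<le> a \<and> a \<le> s then 1 else 0) * h a * ((if a < b \<and> b \<le> s then 1 else 0) * k b))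
       \<in> borel_measurable (borel \<Otimes>\<^sub>M borel)"
      using h k by measurable
    then have Fm: "?F \<in> borel_measurable (lborel \<Otimes>\<^sub>M lborel)"
      by (simp add: indicator_def split_beta' of_bool_def cong: measurable_cong_sets)
    have FB: "\<bar>?F (a, b)\<bar> \<le> Bh * Bk" for a b
      using hb[of a] kb[of b] Bh0 Bk0 by (auto simp: indicator_def abs_mult intro: mult_mono)
    have Fz: "?F (a, b) = 0" if "(a, b) \<notin> {0..s} \<times> {0..s}" for a b
      using that by (auto simp: indicator_def)
    from fubini_ll[OF Fm FB Fz] show ?thesis by simp
  qed
  also have "\<dots> = (\<integral>b. indicator {0..s} b * k b * A b \<partial>lborel)"
  proof (intro Bochner_Integration.integral_cong refl)
    fix b
    have "(\<integral>a. indicator {0..s} a * h a * (indicator {a<..s} b * k b) \<partial>lborel)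
        = (\<integral>a. indicator {0..s} b * k b * (indicator {0..<b} a * h a) \<partial>lborel)"
      by (intro Bochner_Integration.integral_cong) (auto simp: indicator_def)
    also have "\<dots> = indicator {0..s} b * k b * (\<integral>a. indicator {0..<b} a * h a \<partial>lborel)" by simp
    also have "\<dots> = indicator {0..s} b * k b * A b" unfolding A_def ind_halfopen[OF h] ..
    finally show "(\<integral>a. indicator {0..s} a * h a * (indicator {a<..s} b * k b) \<partial>lborel) = indicator {0..s} b * k b * A b" .
  qed
  also have "(\<integral>a. indicator {0..s} a * h a * K a \<partial>lborel) + (\<integral>b. indicator {0..s} b * k b * A b \<partial>lborel)
      = (\<integral>r. indicator {0..s} r * h r * K r + indicator {0..s} r * k r * A r \<partial>lborel)"
  proof (intro Bochner_Integration.integral_add[symmetric])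
    show "integrable lborel (\<lambda>a. indicator {0..s} a * h a * K a)"
      using int_set[of "{0..s}" 0 s "\<lambda>a. h a * K a" "Bh * (Bk * s)"] h Km hb Kb
      by (auto simp: mult.assoc intro!: abs_mult_bound)
    show "integrable lborel (\<lambda>a. indicator {0..s} a * k a * A a)"
      using int_set[of "{0..s}" 0 s "\<lambda>a. k a * A a" "Bk * (Bh * s)"] k Am kb Ab
      by (auto simp: mult.assoc intro!: abs_mult_bound)
  qed
  finally show ?thesis unfolding A_def K_def by (simp add: algebra_simps)
qed


lemma pow_int:
  fixes h :: "real \<Rightarrow> real"
  assumes h: "h \<in> borel_measurable borel" and hb: "\<And>x. \<bar>h x\<bar> \<le> B"
  defines "A \<equiv> \<lambda>r. \<integral>x. indicator {0..r} x * h x \<partial>lborel"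
  shows "0 \<le> s \<Longrightarrow> (\<integral>r. indicator {0..s} r * (h r * A r ^ n) \<partial>lborel) = A s ^ Suc n / Suc n"
proof (induction n arbitrary: s)
  case 0
  then show ?case by (simp add: A_def)
next
  case (Suc n)
  note s = Suc.prems
  have Am: "A \<in> borel_measurable borel" unfolding A_def by (rule Aint_meas[OF h])
  have B0: "0 \<le> B" using hb[of 0] by auto
  have Ab: "\<bar>A r\<bar> \<le> B * s" if "r \<in> {0..s}" for r
  proof -
    have "\<bar>A r\<bar> \<le> B * r" unfolding A_def using that hb by (intro Abound[OF h]) auto
    also have "\<dots> \<le> B * s" using that B0 by (intro mult_left_mono) auto
    finally show ?thesis .
  qed
  define k where "k r = h r * A r ^ n" for r
  have km: "k \<in> borel_measurable borel" unfolding k_def using h Am by measurable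
  have kb: "\<bar>k x\<bar> \<le> B * (B * s) ^ n" if "x \<in> {0..s}" for x
    unfolding k_def using hb[of x] Ab[OF that]
    by (intro abs_mult_bound) (auto simp: power_abs intro: power_mono)
  have K: "(\<integral>x. indicator {0..r} x * k x \<partial>lborel) = A r ^ Suc n / Suc n" if "0 \<le> r" for r
    unfolding k_def using Suc.IH[OF that] .
  have "A s * (\<integral>x. indicator {0..s} x * k x \<partial>lborel)
      = (\<integral>r. indicator {0..s} r * (h r * (\<integral>x. indicator {0..r} x * k x \<partial>lborel) + k r * A r) \<partial>lborel)"
    unfolding A_def by (rule ibp[OF h km _ kb s, where Bh=B]) (use hb in auto)
  also have "\<dots> = (\<integral>r. (1 / Suc n + 1) * (indicator {0..s} r * (h r * A r ^ Suc n)) \<partial>lborel)"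
  proof (intro Bochner_Integration.integral_cong refl)
    fix r show "indicator {0..s} r * (h r * (\<integral>x. indicator {0..r} x * k x \<partial>lborel) + k r * A r)
       = (1 / Suc n + 1) * (indicator {0..s} r * (h r * A r ^ Suc n))"
    proof (cases "r \<in> {0..s}")
      case True
      then have r: "0 \<le> r" by simp
      show ?thesis using True by (simp only: K[OF r]) (simp add: k_def field_simps)
    qed simp
  qed
  also have "\<dots> = (1 / Suc n + 1) * (\<integral>r. indicator {0..s} r * (h r * A r ^ Suc n) \<partial>lborel)"
    by simp
  finally have "A s * (A s ^ Suc n / Suc n) = (1 / Suc n + 1) * (\<integral>r. indicator {0..s} r * (h r * A r ^ Suc n) \<partial>lborel)"
    using K[OF s] by simp
  then show ?case by (simp add: field_simps)
qed


lemma exp_neg_sums: "(\<lambda>i. (-1) ^ i / fact i * x ^ i) sums exp (- x::real)"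
proof -
  have 1: "(\<lambda>i. (- x) ^ i /\<^sub>R fact i) sums exp (- x)" by (rule exp_converges)
  have 2: "(\<lambda>i. (- x) ^ i /\<^sub>R fact i) = (\<lambda>i. (-1) ^ i / fact i * x ^ i)"
  proof
    fix i :: nat
    have "(- x) ^ i = (-1) ^ i * x ^ i" by (rule power_minus)
    then show "(- x) ^ i /\<^sub>R fact i = (-1) ^ i / fact i * x ^ i"
      by (simp add: divide_inverse)
  qed
  from 1 show ?thesis unfolding 2 .
qed

lemma one_minus_exp_sums: "(\<lambda>i. (-1) ^ i * x ^ Suc i / fact (Suc i)) sums (1 - exp (- x::real))"
proof -
  define g where "g i = (-1) ^ i / fact i * x ^ i" for i
  have "g sums exp (- x)" unfolding g_def by (rule exp_neg_sums)
  moreover have "g 0 = 1" by (simp add: g_def)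
  ultimately have "g sums ((exp (- x) - 1) + g 0)" by simp
  then have "(\<lambda>i. g (Suc i)) sums (exp (- x) - 1)" by (simp only: sums_Suc_iff)
  then have 3: "(\<lambda>i. - g (Suc i)) sums (- (exp (- x) - 1))" by (rule sums_minus)
  have 4: "(\<lambda>i. - g (Suc i)) = (\<lambda>i. (-1) ^ i * x ^ Suc i / fact (Suc i))"
  proof
    fix i
    have "- g (Suc i) = - ((-1) * (-1) ^ i / fact (Suc i) * x ^ Suc i)"
      unfolding g_def power_Suc[of "-1::real" i] ..
    also have "\<dots> = (-1) ^ i * x ^ Suc i / fact (Suc i)" by (simp add: divide_inverse)
    finally show "- g (Suc i) = (-1) ^ i * x ^ Suc i / fact (Suc i)" .
  qed
  have 5: "- (exp (- x) - 1) = 1 - exp (- x)" by simp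
  from 3 show ?thesis unfolding 4 5 .
qed

lemma duhamel:
  fixes h :: "real \<Rightarrow> real"
  assumes h: "h \<in> borel_measurable borel" and hb: "\<And>x. \<bar>h x\<bar> \<le> B" and s: "0 \<le> s"
  defines "A \<equiv> \<lambda>r. \<integral>x. indicator {0..r} x * h x \<partial>lborel"
  shows "(\<integral>r. indicator {0..s} r * (h r * exp (- A r)) \<partial>lborel) = 1 - exp (- A s)"
proof -
  have Am: "A \<in> borel_measurable borel" unfolding A_def by (rule Aint_meas[OF h])
  have B0: "0 \<le> B" using hb[of 0] by auto
  have Ab: "\<bar>A r\<bar> \<le> B * s" if "r \<in> {0..s}" for r
  proof -
    have "\<bar>A r\<bar> \<le> B * r" unfolding A_def using that hb by (intro Abound[OF h]) auto
    also have "\<dots> \<le> B * s" using that B0 by (intro mult_left_mono) auto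
    finally show ?thesis .
  qed
  define f where "f i r = indicator {0..s} r * ((-1) ^ i / fact i * (h r * A r ^ i))" for i r
  have fb: "\<bar>f i r\<bar> \<le> (B * (B * s) ^ i) / fact i" for i r
  proof (cases "r \<in> {0..s}")
    case True
    have "\<bar>h r * A r ^ i\<bar> \<le> B * (B * s) ^ i"
      using hb[of r] Ab[OF True] by (intro abs_mult_bound) (auto simp: power_abs intro: power_mono)
    then show ?thesis using True by (simp add: f_def abs_mult divide_right_mono)
  qed (use B0 s in \<open>auto simp: f_def intro!: divide_nonneg_nonneg mult_nonneg_nonneg\<close>)
  have fm: "f i \<in> borel_measurable borel" for i unfolding f_def using h Am by measurable
  have fi: "integrable lborel (f i)" for i
    unfolding f_def
  proof (rule int_set[where c=0 and d=s and B="(B * (B * s) ^ i) / fact i"])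
    show "(\<lambda>r. (-1) ^ i / fact i * (h r * A r ^ i)) \<in> borel_measurable borel" using h Am by measurable
    fix r assume r: "r \<in> {0..s}"
    show "\<bar>(-1) ^ i / fact i * (h r * A r ^ i)\<bar> \<le> (B * (B * s) ^ i) / fact i"
      using fb[of i r] r by (simp add: f_def)
  qed auto
  have intf: "(\<integral>r. f i r \<partial>lborel) = (-1) ^ i * A s ^ Suc i / fact (Suc i)" for i
  proof -
    have "(\<integral>r. f i r \<partial>lborel) = (\<integral>r. (-1) ^ i / fact i * (indicator {0..s} r * (h r * A r ^ i)) \<partial>lborel)"
      unfolding f_def by (simp only: mult.left_commute)
    also have "\<dots> = (-1) ^ i / fact i * (\<integral>r. indicator {0..s} r * (h r * A r ^ i) \<partial>lborel)"
      by (rule integral_mult_right_zero)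
    also have "\<dots> = (-1) ^ i / fact i * (A s ^ Suc i / Suc i)"
      unfolding A_def by (subst pow_int[OF h hb s]) simp
    also have "\<dots> = (-1) ^ i * A s ^ Suc i / fact (Suc i)"
      by (simp add: fact_Suc field_simps)
    finally show ?thesis .
  qed
  have ptw: "(\<lambda>i. f i r) sums (indicator {0..s} r * (h r * exp (- A r)))" for r
  proof -
    have "(\<lambda>i. (-1) ^ i / fact i * A r ^ i * (indicator {0..s} r * h r)) sums (exp (- A r) * (indicator {0..s} r * h r))"
      by (intro sums_mult2 exp_neg_sums)
    then show ?thesis by (simp add: f_def algebra_simps)
  qed
  have sumB: "summable (\<lambda>i. (B * (B * s) ^ i) / fact i)"
  proof -
    have "summable (\<lambda>i. B * (inverse (fact i) * (B * s) ^ i))" by (intro summable_mult summable_exp)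
    moreover have "(\<lambda>i. B * (inverse (fact i) * (B * s) ^ i)) = (\<lambda>i. (B * (B * s) ^ i) / fact i)"
      by (rule ext) (simp add: divide_inverse)
    ultimately show ?thesis by simp
  qed
  have "(\<integral>r. indicator {0..s} r * (h r * exp (- A r)) \<partial>lborel) = (\<integral>r. (\<Sum>i. f i r) \<partial>lborel)"
    by (intro Bochner_Integration.integral_cong refl) (rule sums_unique[OF ptw])
  also have "\<dots> = (\<Sum>i. (\<integral>r. f i r \<partial>lborel))"
  proof (rule integral_suminf)
    show "integrable lborel (f i)" for i by (rule fi)
    show "AE x in lborel. summable (\<lambda>i. norm (f i x))"
      using fb by (intro AE_I2 summable_comparison_test[OF _ sumB]) auto
    have "\<bar>\<integral>r. norm (f i r) \<partial>lborel\<bar> \<le> (B * (B * s) ^ i) / fact i * s" for i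
    proof -
      have "(\<integral>r. norm (f i r) \<partial>lborel) = (\<integral>r. indicator {0..s} r * norm (f i r) \<partial>lborel)"
        by (intro Bochner_Integration.integral_cong) (auto simp: f_def indicator_def)
      also have "\<dots> \<le> (\<integral>r. indicator {0..s} r * ((B * (B * s) ^ i) / fact i) \<partial>lborel)"
      proof (intro integral_mono)
        show "integrable lborel (\<lambda>r. indicator {0..s} r * norm (f i r))"
          using fb fm[of i] by (intro int_set[where c=0 and d=s and B="(B * (B * s) ^ i) / fact i"]) auto
        show "integrable lborel (\<lambda>r. indicator {0..s} r * ((B * (B * s) ^ i) / fact i))"
          by (intro int_set[where c=0 and d=s and B="\<bar>(B * (B * s) ^ i) / fact i\<bar>"]) auto
        show "indicator {0..s} r * norm (f i r) \<le> indicator {0..s} r * ((B * (B * s) ^ i) / fact i)" for r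
          using fb[of i r] by (auto simp: indicator_def)
      qed
      also have "\<dots> = (B * (B * s) ^ i) / fact i * s" using s by (simp add: mult.commute)
      finally show ?thesis by simp
    qed
    then show "summable (\<lambda>i. \<integral>r. norm (f i r) \<partial>lborel)"
      by (intro summable_comparison_test[OF _ summable_mult2[OF sumB]]) auto
  qed
  also have "\<dots> = (\<Sum>i. (-1) ^ i * A s ^ Suc i / fact (Suc i))" by (simp only: intf)
  also have "\<dots> = 1 - exp (- A s)" by (rule sums_unique[symmetric, OF one_minus_exp_sums])
  finally show ?thesis .
qed


lemma triangle:
  fixes h G :: "real \<Rightarrow> real"
  assumes h: "h \<in> borel_measurable borel" and hb: "\<And>x. \<bar>h x\<bar> \<le> B"
    and G: "G \<in> borel_measurable borel" and Gb: "\<And>x. \<bar>G x\<bar> \<le> BG" and t: "0 \<le> t"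
  defines "A \<equiv> \<lambda>r. \<integral>x. indicator {0..r} x * h x \<partial>lborel"
  shows "(\<integral>r. indicator {0..t} r * (h r * exp (- A r) * (\<integral>s. indicator {r..t} s * G s \<partial>lborel)) \<partial>lborel)
       = (\<integral>s. indicator {0..t} s * (G s * (1 - exp (- A s))) \<partial>lborel)"
proof -
  have Am: "A \<in> borel_measurable borel" unfolding A_def by (rule Aint_meas[OF h])
  have B0: "0 \<le> B" using hb[of 0] by auto
  have Ab: "\<bar>A r\<bar> \<le> B * t" if "r \<in> {0..t}" for r
  proof -
    have "\<bar>A r\<bar> \<le> B * r" unfolding A_def using that hb by (intro Abound[OF h]) auto
    also have "\<dots> \<le> B * t" using that B0 by (intro mult_left_mono) auto
    finally show ?thesis .
  qed
  have Mb: "\<bar>exp (- A r)\<bar> \<le> exp (B * t)" if "r \<in> {0..t}" for r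
    using Ab[OF that] by simp
  let ?F = "\<lambda>(r, s). indicator {0..t} r * (h r * exp (- A r)) * (indicator {r..t} s * G s)"
  have "(\<lambda>(r::real, s::real). (if 0 \<le> r \<and> r \<le> t then 1 else 0) * (h r * exp (- A r)) * ((if r \<le> s \<and> s \<le> t then 1 else 0) * G s))
       \<in> borel_measurable (borel \<Otimes>\<^sub>M borel)"
    using h G Am by measurable
  then have Fm: "?F \<in> borel_measurable (lborel \<Otimes>\<^sub>M lborel)"
    by (simp add: indicator_def split_beta' of_bool_def cong: measurable_cong_sets)
  have FB: "\<bar>?F (r, s)\<bar> \<le> B * exp (B * t) * BG" for r s
  proof (cases "r \<in> {0..t} \<and> s \<in> {r..t}")
    case True
    then have "\<bar>h r * exp (- A r) * G s\<bar> \<le> B * exp (B * t) * BG"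
      using hb[of r] Mb[of r] Gb[of s] by (intro abs_mult_bound) auto
    then show ?thesis using True by simp
  next
    case False
    have "0 \<le> \<bar>G s\<bar>" by simp
    then have "0 \<le> BG" using Gb[of s] by linarith
    then show ?thesis using False B0 by (auto simp: indicator_def)
  qed
  have Fz: "?F (r, s) = 0" if "(r, s) \<notin> {0..t} \<times> {0..t}" for r s
    using that by (auto simp: indicator_def)
  have "(\<integral>r. indicator {0..t} r * (h r * exp (- A r) * (\<integral>s. indicator {r..t} s * G s \<partial>lborel)) \<partial>lborel)
      = (\<integral>r. (\<integral>s. ?F (r, s) \<partial>lborel) \<partial>lborel)"
    by (simp add: mult.assoc)
  also have "\<dots> = (\<integral>s. (\<integral>r. ?F (r, s) \<partial>lborel) \<partial>lborel)"
    by (rule fubini_ll[OF Fm FB Fz])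
  also have "\<dots> = (\<integral>s. indicator {0..t} s * (G s * (1 - exp (- A s))) \<partial>lborel)"
  proof (intro Bochner_Integration.integral_cong refl)
    fix s
    have "(\<integral>r. ?F (r, s) \<partial>lborel) = (\<integral>r. (indicator {0..t} s * G s) * (indicator {0..s} r * (h r * exp (- A r))) \<partial>lborel)"
      by (intro Bochner_Integration.integral_cong) (auto simp: indicator_def)
    also have "\<dots> = (indicator {0..t} s * G s) * (\<integral>r. indicator {0..s} r * (h r * exp (- A r)) \<partial>lborel)"
      by (rule integral_mult_right_zero)
    also have "\<dots> = indicator {0..t} s * (G s * (1 - exp (- A s)))"
    proof (cases "s \<in> {0..t}")
      case True
      then have "0 \<le> s" by simp
      from duhamel[OF h hb this] True show ?thesis by (simp add: A_def)
    qed simp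
    finally show "(\<integral>r. ?F (r, s) \<partial>lborel) = indicator {0..t} s * (G s * (1 - exp (- A s)))" .
  qed
  finally show ?thesis .
qed


lemma int_ind:
  fixes f :: "real \<Rightarrow> real"
  assumes "f \<in> borel_measurable borel" "\<And>s. \<bar>f s\<bar> \<le> B"
  shows "integrable lborel (\<lambda>s. indicator {c..d} s * f s)"
  using integrableI_bounded_set_indicator[of "{c..d}" lborel f B] assms
  by (simp add: emeasure_lborel_Icc_eq)

lemma int_prod:
  fixes f :: "'b \<times> real \<Rightarrow> real"
  assumes M: "finite_measure M" and f: "f \<in> borel_measurable (M \<Otimes>\<^sub>M lborel)"
    and B: "\<And>z s. \<bar>f (z, s)\<bar> \<le> B" and z: "\<And>z s. s \<notin> {c..d} \<Longrightarrow> f (z, s) = 0"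
  shows "integrable (M \<Otimes>\<^sub>M lborel) f"
proof (rule integrableI_bounded_set[where A="space M \<times> {c..d}" and B=B])
  show "space M \<times> {c..d} \<in> sets (M \<Otimes>\<^sub>M lborel)" by (intro pair_measureI) auto
  have "emeasure (M \<Otimes>\<^sub>M lborel) (space M \<times> {c..d}) = emeasure M (space M) * emeasure lborel {c..d}"
    by (intro lborel.emeasure_pair_measure_Times) auto
  also have "\<dots> < \<infinity>" using finite_measure.emeasure_finite[OF M, of "space M"]
    by (simp add: emeasure_lborel_Icc_eq ennreal_mult_less_top less_top)
  finally show "emeasure (M \<Otimes>\<^sub>M lborel) (space M \<times> {c..d}) < \<infinity>" .
  show "AE x\<in>space M \<times> {c..d} in M \<Otimes>\<^sub>M lborel. norm (f x) \<le> B"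
    using B by (intro AE_I2) (metis prod.collapse real_norm_def)
  show "AE x in M \<Otimes>\<^sub>M lborel. x \<notin> space M \<times> {c..d} \<longrightarrow> f x = 0"
  proof (intro AE_I2 impI)
    fix x assume "x \<in> space (M \<Otimes>\<^sub>M lborel)" "x \<notin> space M \<times> {c..d}"
    then have "snd x \<notin> {c..d}" by (auto simp: space_pair_measure)
    then show "f x = 0" using z[of "snd x" "fst x"] by simp
  qed
qed (rule f)

lemma fubini_gen:
  fixes f :: "'b \<times> real \<Rightarrow> real"
  assumes M: "finite_measure M" and f: "f \<in> borel_measurable (M \<Otimes>\<^sub>M lborel)"
    and B: "\<And>z s. \<bar>f (z, s)\<bar> \<le> B" and z: "\<And>z s. s \<notin> {c..d} \<Longrightarrow> f (z, s) = 0"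
  shows "(\<integral>z. (\<integral>s. f (z, s) \<partial>lborel) \<partial>M) = (\<integral>s. (\<integral>z. f (z, s) \<partial>M) \<partial>lborel)"
proof -
  interpret M: finite_measure M by (rule M)
  interpret pair_sigma_finite M lborel
    by (simp add: pair_sigma_finite_def M.sigma_finite_measure_axioms lborel.sigma_finite_measure_axioms)
  have "integrable (M \<Otimes>\<^sub>M lborel) (\<lambda>(z, s). f (z, s))"
    using int_prod[OF M f B z] by simp
  from Fubini_integral[of "\<lambda>z s. f (z, s)", OF this] show ?thesis by simp
qed

lemma shift_lemma:
  fixes \<Phi> :: "real \<Rightarrow> real"
  assumes m: "\<Phi> \<in> borel_measurable borel" and b: "\<And>s. \<bar>\<Phi> s\<bar> \<le> B" and a: "0 \<le> a" and t0: "0 < t0"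
  shows "(\<integral>s. indicator {0..t0} s * \<Phi> (a + s) \<partial>lborel)
       = (\<integral>s. indicator {0..t0} s * \<Phi> s \<partial>lborel) + (\<integral>s. indicator {0..a} s * (\<Phi> (s + t0) - \<Phi> s) \<partial>lborel)"
proof -
  have i: "integrable lborel (\<lambda>s. indicator {c..d} s * \<Phi> s)" for c d by (rule int_ind[OF m b])
  have T1: "(\<integral>s. indicator {0..t0} s * \<Phi> (a + s) \<partial>lborel) = (\<integral>s. indicator {a..a+t0} s * \<Phi> s \<partial>lborel)"
    using lborel_integral_real_affine[of 1 "\<lambda>s. indicator {a..a+t0} s * \<Phi> s" a]
    by (simp add: indicator_def)
  have T2: "(\<integral>s. indicator {0..a} s * \<Phi> (s + t0) \<partial>lborel) = (\<integral>s. indicator {t0..a+t0} s * \<Phi> s \<partial>lborel)"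
    using lborel_integral_real_affine[of 1 "\<lambda>s. indicator {t0..a+t0} s * \<Phi> s" t0]
    by (simp add: indicator_def add.commute add_le_cancel_left)
  have m2: "(\<lambda>s. \<Phi> (s + t0)) \<in> borel_measurable borel" using m by measurable
  have i2: "integrable lborel (\<lambda>s. indicator {0..a} s * \<Phi> (s + t0))"
    by (rule int_ind[OF m2 b])
  have AE: "AE s in lborel. indicator {a..a+t0} s * \<Phi> s
      = indicator {0..t0} s * \<Phi> s + indicator {t0..a+t0} s * \<Phi> s - indicator {0..a} s * \<Phi> s"
  proof -
    have N: "AE s in lborel. s \<notin> {0, a, t0, a + t0}"
      by (rule AE_not_in[OF finite_imp_null_set_lborel]) simp
    show ?thesis
    proof (rule AE_mp[OF N], intro AE_I2 impI)
      fix s assume "s \<notin> {0, a, t0, a + t0}"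
      then show "indicator {a..a+t0} s * \<Phi> s
        = indicator {0..t0} s * \<Phi> s + indicator {t0..a+t0} s * \<Phi> s - indicator {0..a} s * \<Phi> s"
        using a t0 unfolding indicator_def by (auto simp: algebra_simps)
    qed
  qed
  have "(\<integral>s. indicator {a..a+t0} s * \<Phi> s \<partial>lborel)
      = (\<integral>s. indicator {0..t0} s * \<Phi> s + indicator {t0..a+t0} s * \<Phi> s - indicator {0..a} s * \<Phi> s \<partial>lborel)"
    using AE i by (intro integral_cong_AE) auto
  also have "\<dots> = (\<integral>s. indicator {0..t0} s * \<Phi> s \<partial>lborel) + (\<integral>s. indicator {t0..a+t0} s * \<Phi> s \<partial>lborel)
      - (\<integral>s. indicator {0..a} s * \<Phi> s \<partial>lborel)"
    using i by (simp add: Bochner_Integration.integral_add Bochner_Integration.integral_diff)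
  finally have X: "(\<integral>s. indicator {a..a+t0} s * \<Phi> s \<partial>lborel) = (\<integral>s. indicator {0..t0} s * \<Phi> s \<partial>lborel) + (\<integral>s. indicator {t0..a+t0} s * \<Phi> s \<partial>lborel)
      - (\<integral>s. indicator {0..a} s * \<Phi> s \<partial>lborel)" .
  have "(\<integral>s. indicator {0..a} s * (\<Phi> (s + t0) - \<Phi> s) \<partial>lborel)
      = (\<integral>s. indicator {0..a} s * \<Phi> (s + t0) - indicator {0..a} s * \<Phi> s \<partial>lborel)"
    by (simp add: algebra_simps)
  also have "\<dots> = (\<integral>s. indicator {0..a} s * \<Phi> (s + t0) \<partial>lborel) - (\<integral>s. indicator {0..a} s * \<Phi> s \<partial>lborel)"
    using i i2 by (simp add: Bochner_Integration.integral_diff)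
  finally show ?thesis using T1 T2 X by simp
qed

lemma Abound2:
  fixes h :: "real \<Rightarrow> real"
  assumes r: "0 \<le> r" and b: "\<And>x. x \<in> {0..r} \<Longrightarrow> \<bar>h x\<bar> \<le> B"
  shows "\<bar>\<integral>x. indicator {0..r} x * h x \<partial>lborel\<bar> \<le> B * r"
proof (cases "integrable lborel (\<lambda>x. indicator {0..r} x * h x)")
  case True
  have i2: "integrable lborel (\<lambda>x. indicator {0..r} x * B)"
    by (intro int_set[where c=0 and d=r and B="\<bar>B\<bar>"]) auto
  have "\<bar>\<integral>x. indicator {0..r} x * h x \<partial>lborel\<bar> \<le> (\<integral>x. \<bar>indicator {0..r} x * h x\<bar> \<partial>lborel)"
    by (rule integral_abs_bound)
  also have "\<dots> \<le> (\<integral>x. indicator {0..r} x * B \<partial>lborel)"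
    using True i2 b by (intro integral_mono) (auto simp: indicator_def)
  also have "\<dots> = B * r" using r by (simp add: mult.commute)
  finally show ?thesis .
next
  case False
  have "0 \<le> B" using b[of 0] r by auto
  then show ?thesis using False r by (simp add: not_integrable_integral_eq)
qed

locale fk =
  fixes p :: "real \<Rightarrow> 'a::topological_space \<Rightarrow> 'a measure"
    and \<Omega> :: "'w set" and F :: "real \<Rightarrow> 'w measure"
    and X :: "real \<Rightarrow> 'w \<Rightarrow> 'a" and P :: "'a \<Rightarrow> 'w measure"
  assumes TF: "transition_function p" and MP: "markov_process p \<Omega> F X P"
begin

lemma p_prob: "0 \<le> t \<Longrightarrow> prob_space (p t x)"
  using TF unfolding transition_function_def by auto
lemma p_sets: "0 \<le> t \<Longrightarrow> sets (p t x) = sets borel"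
  using TF unfolding transition_function_def by auto
lemma p_space: "0 \<le> t \<Longrightarrow> space (p t x) = UNIV"
  by (metis p_sets sets_eq_imp_space_eq space_borel)

abbreviation "K \<equiv> restrict_space borel {0::real..} \<Otimes>\<^sub>M (borel :: 'a measure)"

lemma space_K: "space K = {0..} \<times> UNIV" by (simp add: space_pair_measure)

lemma kernel: "(\<lambda>z. p (fst z) (snd z)) \<in> measurable K (subprob_algebra borel)"
proof (rule measurable_subprob_algebra)
  fix a assume "a \<in> space K"
  then have "fst a \<ge> 0" by (auto simp: space_K)
  then show "subprob_space (p (fst a) (snd a))" "sets (p (fst a) (snd a)) = sets borel"
    by (simp_all add: p_prob p_sets prob_space_imp_subprob_space)
next
  fix A :: "'a set" assume A: "A \<in> sets borel"
  have m: "(\<lambda>(t, x). measure (p t x) A) \<in> borel_measurable K"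
    using TF A unfolding transition_function_def by auto
  show "(\<lambda>a. emeasure (p (fst a) (snd a)) A) \<in> borel_measurable K"
  proof (rule measurable_cong[THEN iffD1])
    show "(\<lambda>a. ennreal (measure (p (fst a) (snd a)) A)) \<in> borel_measurable K"
      using m by (intro measurable_compose[OF _ measurable_ennreal]) (simp add: split_beta')
    fix a assume "a \<in> space K"
    then have "fst a \<ge> 0" by (auto simp: space_K)
    then show "ennreal (measure (p (fst a) (snd a)) A) = emeasure (p (fst a) (snd a)) A"
      using p_prob[of "fst a" "snd a"] by (simp add: prob_space_def finite_measure.emeasure_eq_measure)
  qed
qed

lemma kernel_t: "0 \<le> t \<Longrightarrow> p t \<in> measurable borel (subprob_algebra borel)"
proof -
  assume t: "0 \<le> t"
  have "(\<lambda>y. (t, y)) \<in> measurable borel K"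
    using t by (intro measurable_Pair measurable_const measurable_ident) (auto simp: space_restrict_space)
  from measurable_compose[OF this kernel] show ?thesis by simp
qed

lemma ptf_meas_K: "f \<in> borel_measurable borel \<Longrightarrow> (\<lambda>z. ptf p (fst z) f (snd z)) \<in> borel_measurable K"
  unfolding ptf_def
  by (rule measurable_compose[OF kernel integral_measurable_subprob_algebra]) auto

lemma ptf_meas: "0 \<le> t \<Longrightarrow> f \<in> borel_measurable borel \<Longrightarrow> ptf p t f \<in> borel_measurable borel"
  unfolding ptf_def
  by (rule measurable_compose[OF kernel_t integral_measurable_subprob_algebra]) auto

lemma ptf_bound:
  assumes "0 \<le> t" "f \<in> borel_measurable borel" "\<And>y. \<bar>f y\<bar> \<le> B"
  shows "\<bar>ptf p t f x\<bar> \<le> B"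
proof -
  interpret prob_space "p t x" using p_prob assms by auto
  have mf: "f \<in> borel_measurable (p t x)" using assms(2) by (subst measurable_cong_sets[OF p_sets[OF assms(1)] refl])
  have int: "integrable (p t x) (\<lambda>y. \<bar>f y\<bar>)"
    using mf assms(3) by (intro integrable_const_bound[where B=B]) auto
  have "\<bar>\<integral>y. f y \<partial>p t x\<bar> \<le> (\<integral>y. \<bar>f y\<bar> \<partial>p t x)" by (rule integral_abs_bound)
  also have "\<dots> \<le> B" using int assms(3) by (intro integral_le_const) auto
  finally have "\<bar>\<integral>y. f y \<partial>p t x\<bar> \<le> B" .
  then show ?thesis by (simp add: ptf_def)
qed


lemma kernel_t': "0 \<le> s \<Longrightarrow> 0 \<le> t \<Longrightarrow> p t \<in> measurable (p s x) (subprob_algebra borel)"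
  by (subst measurable_cong_sets[OF p_sets refl]) (auto intro: kernel_t)

lemma p_bind: assumes s: "0 \<le> s" and t: "0 \<le> t" shows "p (s + t) x = p s x \<bind> p t"
proof (rule measure_eqI)
  have ne: "space (p s x) \<noteq> {}" using p_space[OF s] by auto
  show "sets (p (s + t) x) = sets (p s x \<bind> p t)"
    using s t ne by (subst sets_bind[where N=borel]) (auto simp: p_sets)
  fix A assume "A \<in> sets (p (s + t) x)"
  then have A: "A \<in> sets borel" using s t p_sets by auto
  have mA: "(\<lambda>y. measure (p t y) A) \<in> borel_measurable (p s x)"
    using measurable_compose[OF kernel_t'[OF s t] measurable_measure_subprob_algebra[OF A]] .
  have int: "integrable (p s x) (\<lambda>y. measure (p t y) A)"
    using mA p_prob[OF s] by (intro finite_measure.integrable_const_bound[where B=1])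
      (auto simp: prob_space_def intro!: prob_space.prob_le_1 p_prob[OF t])
  have "emeasure (p s x \<bind> p t) A = (\<integral>\<^sup>+y. emeasure (p t y) A \<partial>p s x)"
    using ne kernel_t'[OF s t] A by (rule emeasure_bind)
  also have "\<dots> = (\<integral>\<^sup>+y. ennreal (measure (p t y) A) \<partial>p s x)"
    using p_prob[OF t] by (intro nn_integral_cong) (simp add: prob_space_def finite_measure.emeasure_eq_measure)
  also have "\<dots> = ennreal (\<integral>y. measure (p t y) A \<partial>p s x)"
    using int by (intro nn_integral_eq_integral) auto
  also have "\<dots> = ennreal (measure (p (s+t) x) A)"
    using TF s t A unfolding transition_function_def by auto
  also have "\<dots> = emeasure (p (s+t) x) A"
    using p_prob[of "s+t" x] s t by (simp add: prob_space_def finite_measure.emeasure_eq_measure)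
  finally show "emeasure (p (s + t) x) A = emeasure (p s x \<bind> p t) A" by simp
qed

lemma ptf_CK:
  assumes s: "0 \<le> s" and t: "0 \<le> t" and f: "f \<in> borel_measurable borel" and B: "\<And>y. \<bar>f y\<bar> \<le> B"
  shows "ptf p (s + t) f x = ptf p s (ptf p t f) x"
  unfolding ptf_def p_bind[OF s t]
proof (rule integral_bind[where K=borel and B=B and B'=1])
  show "p t \<in> measurable (p s x) (subprob_algebra borel)" by (rule kernel_t'[OF s t])
  show "finite_measure (p s x)" using p_prob[OF s] by (simp add: prob_space_def)
  show "AE y in p s x. emeasure (p t y) (space (p t y)) \<le> ennreal 1"
    using p_prob[OF t] by (auto simp: prob_space.emeasure_space_1)
qed (use f B in auto)

end

subsection \<open>Markov process facts\<close>

context fk begin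

lemma P_prob: "prob_space (P x)" and P_space: "space (P x) = \<Omega>"
  using MP unfolding markov_process_def by auto

lemma F_space: "0 \<le> t \<Longrightarrow> space (F t) = \<Omega>" and F_sub: "0 \<le> t \<Longrightarrow> sets (F t) \<subseteq> sets (P x)"
  using MP unfolding markov_process_def by auto

lemma subalg: "0 \<le> t \<Longrightarrow> subalgebra (P x) (F t)"
  unfolding subalgebra_def using F_space F_sub P_space by auto

lemma joint: "0 \<le> t \<Longrightarrow> (\<lambda>(s, \<omega>). X s \<omega>) \<in> measurable (restrict_space borel {0..t} \<Otimes>\<^sub>M F t) borel"
  using MP unfolding markov_process_def by auto

lemma X_F: assumes "0 \<le> s" "s \<le> t" shows "X s \<in> measurable (F t) borel"
proof -
  have "(\<lambda>\<omega>. (s, \<omega>)) \<in> measurable (F t) (restrict_space borel {0..t} \<Otimes>\<^sub>M F t)"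
    using assms by (intro measurable_Pair measurable_const measurable_ident_sets)
      (auto simp: space_restrict_space)
  from measurable_compose[OF this joint] assms show ?thesis by simp
qed

lemma X_P: "0 \<le> s \<Longrightarrow> X s \<in> measurable (P x) borel"
  using measurable_from_subalg[OF subalg X_F] by auto

lemma F_P: "0 \<le> t \<Longrightarrow> Y \<in> borel_measurable (F t) \<Longrightarrow> Y \<in> borel_measurable (P x)"
  using measurable_from_subalg[OF subalg] by blast

lemma X0: "AE \<omega> in P x. X 0 \<omega> = x"
  using MP unfolding markov_process_def by auto

lemma markov_set: "0 \<le> s \<Longrightarrow> 0 \<le> t \<Longrightarrow> A \<in> sets borel \<Longrightarrow> B \<in> sets (F t) \<Longrightarrow>
   measure (P x) (B \<inter> {\<omega>\<in>\<Omega>. X (t + s) \<omega> \<in> A}) = (\<integral>\<omega>. indicator B \<omega> * measure (p s (X t \<omega>)) A \<partial>P x)"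
  using MP unfolding markov_process_def by blast


lemma P_fin: "finite_measure (P x)" using P_prob by (simp add: prob_space_def)

lemma int_bounded: fixes g :: "'w \<Rightarrow> real" and C :: real shows "g \<in> borel_measurable (P x) \<Longrightarrow> (\<And>\<omega>. \<bar>g \<omega>\<bar> \<le> C) \<Longrightarrow> integrable (P x) g"
  using P_fin by (intro finite_measure.integrable_const_bound[where B=C]) auto

lemma ptf_X_meas: "0 \<le> r \<Longrightarrow> 0 \<le> a \<Longrightarrow> f \<in> borel_measurable borel \<Longrightarrow>
    (\<lambda>\<omega>. ptf p a f (X r \<omega>)) \<in> borel_measurable (F r)"
  using measurable_compose[OF X_F ptf_meas] by auto

lemma markov_B:
  assumes r: "0 \<le> r" and a: "0 \<le> a" and B: "B \<in> sets (F r)"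
    and f: "f \<in> borel_measurable borel" and fb: "\<And>y. \<bar>f y\<bar> \<le> C"
  shows "(\<integral>\<omega>. indicator B \<omega> * f (X (r + a) \<omega>) \<partial>P x) = (\<integral>\<omega>. indicator B \<omega> * ptf p a f (X r \<omega>) \<partial>P x)"
proof -
  have BP: "B \<in> sets (P x)" using F_sub[OF r] B by auto
  let ?D = "density (P x) (indicator B)"
  have Dsets: "sets ?D = sets (P x)" by simp
  have Dspace: "space ?D = \<Omega>" by (simp add: P_space)
  have ne: "\<Omega> \<noteq> {}" using prob_space.not_empty[OF P_prob] P_space by metis
  have Xra: "X (r + a) \<in> measurable (P x) borel" using X_P r a by auto
  have Xr: "X r \<in> measurable (P x) borel" using X_P r by auto
  have ker: "(\<lambda>\<omega>. p a (X r \<omega>)) \<in> measurable ?D (subprob_algebra borel)"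
    using measurable_compose[OF Xr kernel_t[OF a]] by (simp cong: measurable_cong_sets)
  have Dfin: "finite_measure ?D" using P_fin BP by (rule finite_measure.finite_measure_restricted)
  have eq: "distr ?D borel (X (r + a)) = ?D \<bind> (\<lambda>\<omega>. p a (X r \<omega>))"
  proof (rule measure_eqI)
    show "sets (distr ?D borel (X (r + a))) = sets (?D \<bind> (\<lambda>\<omega>. p a (X r \<omega>)))"
      using ne a by (subst sets_bind[where N=borel]) (auto simp: p_sets Dspace P_space)
    fix A assume "A \<in> sets (distr ?D borel (X (r + a)))"
    then have A: "A \<in> sets borel" by simp
    have pre: "X (r + a) -` A \<inter> \<Omega> \<in> sets (P x)"
      using measurable_sets[OF Xra A] P_space by simp
    have "emeasure (distr ?D borel (X (r + a))) A = emeasure ?D (X (r + a) -` A \<inter> \<Omega>)"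
      using Xra A by (subst emeasure_distr) (auto simp: Dspace P_space cong: measurable_cong_sets)
    also have "\<dots> = (\<integral>\<^sup>+\<omega>. indicator B \<omega> * indicator (X (r + a) -` A \<inter> \<Omega>) \<omega> \<partial>P x)"
      using pre BP by (simp add: emeasure_density nn_integral_set_ennreal mult.commute)
    also have "\<dots> = emeasure (P x) (B \<inter> {\<omega>\<in>\<Omega>. X (r + a) \<omega> \<in> A})"
    proof -
      have "B \<inter> {\<omega>\<in>\<Omega>. X (r + a) \<omega> \<in> A} = B \<inter> (X (r + a) -` A \<inter> \<Omega>)" by auto
      then show ?thesis using pre BP
        by (simp add: indicator_inter_arith[symmetric] nn_integral_indicator sets.Int ennreal_indicator)
    qed
    also have "\<dots> = ennreal (measure (P x) (B \<inter> {\<omega>\<in>\<Omega>. X (r + a) \<omega> \<in> A}))"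
      using P_fin by (simp add: finite_measure.emeasure_eq_measure)
    also have "\<dots> = ennreal (\<integral>\<omega>. indicator B \<omega> * measure (p a (X r \<omega>)) A \<partial>P x)"
      using markov_set[OF a r A B] by (simp add: add.commute)
    also have "\<dots> = (\<integral>\<^sup>+\<omega>. ennreal (indicator B \<omega> * measure (p a (X r \<omega>)) A) \<partial>P x)"
    proof (rule nn_integral_eq_integral[symmetric])
      have "(\<lambda>\<omega>. measure (p a (X r \<omega>)) A) \<in> borel_measurable (P x)"
        using measurable_compose[OF measurable_compose[OF Xr kernel_t[OF a]] measurable_measure_subprob_algebra[OF A]] .
      then show "integrable (P x) (\<lambda>\<omega>. indicator B \<omega> * measure (p a (X r \<omega>)) A)"
        using BP by (intro int_bounded[where C=1])
          (auto simp: indicator_def intro!: prob_space.prob_le_1 p_prob[OF a])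
    qed (auto)
    also have "\<dots> = (\<integral>\<^sup>+\<omega>. indicator B \<omega> * emeasure (p a (X r \<omega>)) A \<partial>P x)"
      using p_prob[OF a] by (intro nn_integral_cong)
        (auto simp: ennreal_mult' ennreal_indicator prob_space_def finite_measure.emeasure_eq_measure)
    also have "\<dots> = (\<integral>\<^sup>+\<omega>. emeasure (p a (X r \<omega>)) A \<partial>?D)"
      using BP measurable_compose[OF measurable_compose[OF Xr kernel_t[OF a]] measurable_emeasure_subprob_algebra[OF A]]
      by (subst nn_integral_density) auto
    also have "\<dots> = emeasure (?D \<bind> (\<lambda>\<omega>. p a (X r \<omega>))) A"
      using ne ker A by (intro emeasure_bind[symmetric]) (auto simp: Dspace P_space)
    finally show "emeasure (distr ?D borel (X (r + a))) A = emeasure (?D \<bind> (\<lambda>\<omega>. p a (X r \<omega>))) A" .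
  qed
  have dens: "(\<integral>\<omega>. h \<omega> \<partial>?D) = (\<integral>\<omega>. indicator B \<omega> * h \<omega> \<partial>P x)"
    if "h \<in> borel_measurable (P x)" for h :: "'w \<Rightarrow> real"
    using integral_density[of h "P x" "indicator B", unfolded ennreal_indicator] BP that by auto
  have "(\<integral>\<omega>. indicator B \<omega> * f (X (r + a) \<omega>) \<partial>P x) = (\<integral>\<omega>. f (X (r + a) \<omega>) \<partial>?D)"
    using f Xra by (subst dens) auto
  also have "\<dots> = (\<integral>y. f y \<partial>distr ?D borel (X (r + a)))"
    using f Xra by (subst integral_distr) (auto cong: measurable_cong_sets)
  also have "\<dots> = (\<integral>y. f y \<partial>(?D \<bind> (\<lambda>\<omega>. p a (X r \<omega>))))" by (simp add: eq)
  also have "\<dots> = (\<integral>\<omega>. ptf p a f (X r \<omega>) \<partial>?D)"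
    unfolding ptf_def
  proof (rule integral_bind[where K=borel and B=C and B'=1])
    show "AE \<omega> in ?D. emeasure (p a (X r \<omega>)) (space (p a (X r \<omega>))) \<le> ennreal 1"
      using p_prob[OF a] by (auto simp: prob_space.emeasure_space_1)
  qed (use f fb ker Dfin in auto)
  also have "\<dots> = (\<integral>\<omega>. indicator B \<omega> * ptf p a f (X r \<omega>) \<partial>P x)"
    using measurable_compose[OF Xr ptf_meas[OF a f]] by (subst dens) auto
  finally show ?thesis .
qed


lemma markov:
  assumes r: "0 \<le> r" and a: "0 \<le> a" and Y: "Y \<in> borel_measurable (F r)" and Yb: "\<And>\<omega>. \<bar>Y \<omega>\<bar> \<le> CY"
    and f: "f \<in> borel_measurable borel" and fb: "\<And>y. \<bar>f y\<bar> \<le> C"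
  shows "(\<integral>\<omega>. Y \<omega> * f (X (r + a) \<omega>) \<partial>P x) = (\<integral>\<omega>. Y \<omega> * ptf p a f (X r \<omega>) \<partial>P x)"
proof -
  interpret S: finite_measure_subalgebra "P x" "F r"
    using P_fin subalg[OF r] by (simp add: finite_measure_subalgebra_def finite_measure_subalgebra_axioms_def)
  let ?Z = "\<lambda>\<omega>. f (X (r + a) \<omega>)" and ?W = "\<lambda>\<omega>. ptf p a f (X r \<omega>)"
  have Zm: "?Z \<in> borel_measurable (P x)" using measurable_compose[OF X_P f] r a by auto
  have WF: "?W \<in> borel_measurable (F r)" by (rule ptf_X_meas[OF r a f])
  have Wm: "?W \<in> borel_measurable (P x)" using F_P[OF r WF] .
  have Zi: "integrable (P x) ?Z" using Zm fb by (intro int_bounded[where C=C]) auto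
  have Wi: "integrable (P x) ?W" using Wm ptf_bound[OF a f fb] by (intro int_bounded[where C=C]) auto
  have Ym: "Y \<in> borel_measurable (P x)" using F_P[OF r Y] .
  have AE: "AE \<omega> in P x. real_cond_exp (P x) (F r) ?Z \<omega> = ?W \<omega>"
  proof (rule S.real_cond_exp_charact)
    fix A assume A: "A \<in> sets (F r)"
    show "(\<integral>\<omega>\<in>A. ?Z \<omega> \<partial>P x) = (\<integral>\<omega>\<in>A. ?W \<omega> \<partial>P x)"
      unfolding set_lebesgue_integral_def using markov_B[OF r a A f fb] by simp
  qed (use Zi Wi WF in auto)
  have YZ: "integrable (P x) (\<lambda>\<omega>. Y \<omega> * ?Z \<omega>)"
    using Ym Zm Yb fb by (intro int_bounded[where C="CY * C"]) (auto simp: abs_mult intro: mult_mono')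
  have "(\<integral>\<omega>. Y \<omega> * ?Z \<omega> \<partial>P x) = (\<integral>\<omega>. Y \<omega> * real_cond_exp (P x) (F r) ?Z \<omega> \<partial>P x)"
    using S.real_cond_exp_intg(2)[OF YZ Y Zm] by simp
  also have "\<dots> = (\<integral>\<omega>. Y \<omega> * ?W \<omega> \<partial>P x)"
    using AE Ym Wm by (intro integral_cong_AE) (auto intro!: borel_measurable_times borel_measurable_cond_exp2)
  finally show ?thesis .
qed

lemma expect_X:
  assumes a: "0 \<le> a" and f: "f \<in> borel_measurable borel" and fb: "\<And>y. \<bar>f y\<bar> \<le> C"
  shows "(\<integral>\<omega>. f (X a \<omega>) \<partial>P x) = ptf p a f x"
proof -
  have "(\<integral>\<omega>. 1 * f (X (0 + a) \<omega>) \<partial>P x) = (\<integral>\<omega>. 1 * ptf p a f (X 0 \<omega>) \<partial>P x)"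
    by (rule markov[where CY=1 and C=C]) (use a f fb in auto)
  also have "\<dots> = (\<integral>\<omega>. ptf p a f x \<partial>P x)"
    using measurable_compose[OF X_P ptf_meas[OF a f], of 0] by (intro integral_cong_AE) (auto intro: AE_mp[OF X0[of x]])
  also have "\<dots> = ptf p a f x" using P_prob by (simp add: prob_space.prob_space)
  finally show ?thesis by simp
qed


lemma ptf_gen_meas:
  assumes T: "T \<in> borel_measurable N" and Y: "Y \<in> measurable N borel" and f: "f \<in> borel_measurable borel"
  shows "(\<lambda>\<omega>. ptf p (max 0 (T \<omega>)) f (Y \<omega>)) \<in> borel_measurable N"
proof -
  have "(\<lambda>\<omega>. (max 0 (T \<omega>), Y \<omega>)) \<in> measurable N K"
    using T Y by (intro measurable_Pair measurable_restrict_space2) auto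
  from measurable_compose[OF this ptf_meas_K[OF f]] show ?thesis by simp
qed

lemma ptf_integrable: fixes f :: "'a \<Rightarrow> real" shows
  "0 \<le> t \<Longrightarrow> f \<in> borel_measurable borel \<Longrightarrow> (\<And>y. \<bar>f y\<bar> \<le> B) \<Longrightarrow> integrable (p t y) f"
  using p_prob[of t y] by (intro finite_measure.integrable_const_bound[where B=B])
    (auto simp: prob_space_def measurable_cong_sets[OF p_sets refl])

lemma ptf_diff_div:
  assumes t: "0 \<le> t" and f: "f \<in> borel_measurable borel" "\<And>y. \<bar>f y\<bar> \<le> B"
    and g: "g \<in> borel_measurable borel" "\<And>y. \<bar>g y\<bar> \<le> B'"
  shows "ptf p t (\<lambda>z. (f z - g z) / c) y = (ptf p t f y - ptf p t g y) / c"
  unfolding ptf_def using ptf_integrable[OF t f] ptf_integrable[OF t g]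
  by (simp add: integral_diff)

lemma ptf_add_const:
  assumes t: "0 \<le> t" and f: "f \<in> borel_measurable borel" "\<And>y. \<bar>f y\<bar> \<le> B"
  shows "ptf p t (\<lambda>z. f z + c) y = ptf p t f y + c"
  unfolding ptf_def using ptf_integrable[OF t f] p_prob[OF t]
  by (subst Bochner_Integration.integral_add) (auto simp: prob_space.prob_space prob_space_def finite_measure.integrable_const)


lemma v_ident:
  fixes w :: "'a \<Rightarrow> real"
  assumes w: "w \<in> borel_measurable borel" and wb: "\<And>y. \<bar>w y\<bar> \<le> Bw" and t0: "0 < t0" and a: "0 \<le> a"
  shows "ptf p a (\<lambda>z. (1/t0) * (\<integral>s. indicator {0..t0} s * ptf p s w z \<partial>lborel)) y
     = (1/t0) * (\<integral>s. indicator {0..t0} s * ptf p s w y \<partial>lborel)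
       + (\<integral>s. indicator {0..a} s * ptf p s (\<lambda>z. (ptf p t0 w z - w z) / t0) y \<partial>lborel)"
proof -
  define \<phi> where "\<phi> s z = ptf p (max 0 s) w z" for s z
  have \<phi>m: "(\<lambda>\<omega>. \<phi> (T \<omega>) (Y \<omega>)) \<in> borel_measurable N"
    if "T \<in> borel_measurable N" "Y \<in> measurable N borel" for N :: "'c measure" and T Y
    unfolding \<phi>_def using ptf_gen_meas[OF that w] .
  have \<phi>b: "\<bar>\<phi> s z\<bar> \<le> Bw" for s z unfolding \<phi>_def by (rule ptf_bound[OF _ w wb]) simp
  have ind\<phi>: "indicator {c..d} s * ptf p s w z = indicator {c..d} s * \<phi> s z" if "0 \<le> c" for c d s z
    using that by (auto simp: \<phi>_def indicator_def max_def)
  have \<phi>1: "(\<lambda>s. \<phi> (f s) z) \<in> borel_measurable borel" if "f \<in> borel_measurable borel" for z f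
    using \<phi>m[of f borel "\<lambda>_. z"] that by simp
  have wt: "ptf p t0 w \<in> borel_measurable borel" using ptf_meas[OF _ w] t0 by simp
  have wtb: "\<bar>ptf p t0 w y\<bar> \<le> Bw" for y using ptf_bound[OF _ w wb] t0 by simp
  have fm: "fst \<in> measurable (p a y \<Otimes>\<^sub>M lborel) borel"
    using measurable_fst[of "p a y" lborel] by (simp add: measurable_cong_sets[OF refl p_sets[OF a]])
  have jm: "(\<lambda>(z, s). indicator {0..t0} s * \<phi> s z) \<in> borel_measurable (p a y \<Otimes>\<^sub>M lborel)"
  proof -
    have "(\<lambda>x. \<phi> (snd x) (fst x)) \<in> borel_measurable (p a y \<Otimes>\<^sub>M lborel)"
      using \<phi>m[OF _ fm, of snd] by simp
    then show ?thesis by (simp add: split_beta')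
  qed
  have LHS1: "ptf p a (\<lambda>z. (1/t0) * (\<integral>s. indicator {0..t0} s * ptf p s w z \<partial>lborel)) y
      = (1/t0) * (\<integral>z. (\<integral>s. indicator {0..t0} s * \<phi> s z \<partial>lborel) \<partial>p a y)"
  proof -
    have e: "(\<lambda>z. (1/t0) * (\<integral>s. indicator {0..t0} s * ptf p s w z \<partial>lborel))
        = (\<lambda>z. (1/t0) * (\<integral>s. indicator {0..t0} s * \<phi> s z \<partial>lborel))" by (simp add: ind\<phi>)
    show ?thesis by (simp only: e) (simp add: ptf_def)
  qed
  also have "\<dots> = (1/t0) * (\<integral>s. (\<integral>z. indicator {0..t0} s * \<phi> s z \<partial>p a y) \<partial>lborel)"
  proof -
    have bnd: "\<bar>(\<lambda>(z, s). indicator {0..t0} s * \<phi> s z) (z, s)\<bar> \<le> Bw" for z s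
      using \<phi>b[of s z] by (auto simp: indicator_def abs_mult)
    have zero: "(\<lambda>(z, s). indicator {0..t0} s * \<phi> s z) (z, s) = 0" if "s \<notin> {0..t0}" for z s
      using that by simp
    have fin: "finite_measure (p a y)" using p_prob[OF a] by (simp add: prob_space_def)
    from fubini_gen[OF fin jm bnd zero] show ?thesis by simp
  qed
  also have "\<dots> = (1/t0) * (\<integral>s. indicator {0..t0} s * \<phi> (a + s) y \<partial>lborel)"
  proof -
    have pw: "(\<integral>z. indicator {0..t0} s * \<phi> s z \<partial>p a y) = indicator {0..t0} s * \<phi> (a + s) y" for s
    proof (cases "s \<in> {0..t0}")
      case True
      then have "(\<integral>z. indicator {0..t0} s * \<phi> s z \<partial>p a y) = ptf p a (ptf p s w) y"
        by (simp add: ptf_def \<phi>_def)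
      also have "\<dots> = ptf p (a + s) w y" using True a by (intro ptf_CK[symmetric, OF _ _ w wb]) auto
      finally show ?thesis using True a by (simp add: \<phi>_def)
    qed simp
    show ?thesis by (simp only: pw)
  qed
  finally have LHS: "ptf p a (\<lambda>z. (1/t0) * (\<integral>s. indicator {0..t0} s * ptf p s w z \<partial>lborel)) y
      = (1/t0) * (\<integral>s. indicator {0..t0} s * \<phi> (a + s) y \<partial>lborel)" .
  have R2: "(\<integral>s. indicator {0..a} s * ptf p s (\<lambda>z. (ptf p t0 w z - w z) / t0) y \<partial>lborel)
     = (\<integral>s. indicator {0..a} s * (\<phi> (s + t0) y - \<phi> s y) \<partial>lborel) / t0"
  proof -
    have "indicator {0..a} s * ptf p s (\<lambda>z. (ptf p t0 w z - w z) / t0) y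
        = indicator {0..a} s * (\<phi> (s + t0) y - \<phi> s y) / t0" for s
    proof (cases "s \<in> {0..a}")
      case True
      then have "ptf p s (\<lambda>z. (ptf p t0 w z - w z) / t0) y = (ptf p s (ptf p t0 w) y - ptf p s w y) / t0"
        by (intro ptf_diff_div[OF _ wt wtb w wb]) auto
      also have "ptf p s (ptf p t0 w) y = ptf p (s + t0) w y"
        using True t0 by (intro ptf_CK[symmetric, OF _ _ w wb]) auto
      finally show ?thesis using True t0 by (simp add: \<phi>_def)
    qed simp
    then show ?thesis by (simp add: integral_divide_zero)
  qed
  have sh: "(\<integral>s. indicator {0..t0} s * \<phi> (a + s) y \<partial>lborel)
       = (\<integral>s. indicator {0..t0} s * \<phi> s y \<partial>lborel) + (\<integral>s. indicator {0..a} s * (\<phi> (s + t0) y - \<phi> s y) \<partial>lborel)"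
    by (rule shift_lemma[OF \<phi>1[OF measurable_ident_sets[OF refl]] \<phi>b a t0])
  have "(1/t0) * (\<integral>s. indicator {0..t0} s * ptf p s w y \<partial>lborel) = (1/t0) * (\<integral>s. indicator {0..t0} s * \<phi> s y \<partial>lborel)"
    by (simp add: ind\<phi>)
  then show ?thesis unfolding LHS R2 sh using t0 by (simp add: field_simps)
qed


lemma id_F: "0 \<le> T \<Longrightarrow> (\<lambda>\<omega>. \<omega>) \<in> measurable (P x) (F T)"
  using F_sub[of T x] F_space[of T] P_space[of x] unfolding measurable_def by auto

lemma Xc_meas:
  assumes T: "0 \<le> T" and R: "R \<in> borel_measurable N" and W: "W \<in> measurable N (F T)"
  shows "(\<lambda>n. X (max 0 (min T (R n))) (W n)) \<in> measurable N borel"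
proof -
  have "(\<lambda>n. (max 0 (min T (R n)), W n)) \<in> measurable N (restrict_space borel {0..T} \<Otimes>\<^sub>M F T)"
    using R W T by (intro measurable_Pair measurable_restrict_space2) auto
  from measurable_compose[OF this joint[OF T]] show ?thesis by simp
qed

lemma Aint_gen:
  fixes f :: "'a \<Rightarrow> real"
  assumes T: "0 \<le> T" and L: "L \<in> borel_measurable N" and U: "U \<in> borel_measurable N"
    and W: "W \<in> measurable N (F T)" and f: "f \<in> borel_measurable borel"
  shows "(\<lambda>n. \<integral>y. indicator {L n..U n} y * f (X (max 0 (min T y)) (W n)) \<partial>lborel) \<in> borel_measurable N"
proof -
  have X2: "(\<lambda>z. X (max 0 (min T (snd z))) (W (fst z))) \<in> measurable (N \<Otimes>\<^sub>M borel) borel"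
    using Xc_meas[OF T, of snd "N \<Otimes>\<^sub>M borel" "\<lambda>z. W (fst z)"] W by simp
  have Lm: "(\<lambda>z. L (fst z)) \<in> borel_measurable (N \<Otimes>\<^sub>M borel)" by (rule measurable_compose[OF measurable_fst L])
  have Um: "(\<lambda>z. U (fst z)) \<in> borel_measurable (N \<Otimes>\<^sub>M borel)" by (rule measurable_compose[OF measurable_fst U])
  have sm: "snd \<in> borel_measurable (N \<Otimes>\<^sub>M borel)" by (rule measurable_snd)
  have S: "{z \<in> space (N \<Otimes>\<^sub>M borel). snd z \<in> {L (fst z)..U (fst z)}} \<in> sets (N \<Otimes>\<^sub>M borel)"
  proof -
    have "{z \<in> space (N \<Otimes>\<^sub>M borel). snd z \<in> {L (fst z)..U (fst z)}}
      = {z \<in> space (N \<Otimes>\<^sub>M borel). L (fst z) \<le> snd z} \<inter> {z \<in> space (N \<Otimes>\<^sub>M borel). snd z \<le> U (fst z)}"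
      by auto
    then show ?thesis using borel_measurable_le[OF Lm sm] borel_measurable_le[OF sm Um] by auto
  qed
  have "(\<lambda>z. indicator {L (fst z)..U (fst z)} (snd z) * f (X (max 0 (min T (snd z))) (W (fst z))))
     \<in> borel_measurable (N \<Otimes>\<^sub>M borel)"
  proof -
    have i: "(\<lambda>z. indicator {L (fst z)..U (fst z)} (snd z) :: real) \<in> borel_measurable (N \<Otimes>\<^sub>M borel)"
      by (rule borel_measurable_indicator'[OF S])
    have j: "(\<lambda>z. f (X (max 0 (min T (snd z))) (W (fst z)))) \<in> borel_measurable (N \<Otimes>\<^sub>M borel)"
      by (rule measurable_compose[OF X2 f])
    show ?thesis using i j by measurable
  qed
  then have "(\<lambda>(n, y). indicator {L n..U n} y * f (X (max 0 (min T y)) (W n))) \<in> borel_measurable (N \<Otimes>\<^sub>M lborel)"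
    unfolding measurable_cong_sets[OF sets_pair_measure_cong[OF refl sets_lborel] refl]
    by (simp add: indicator_def split_beta' of_bool_def)
  from lborel.borel_measurable_lebesgue_integral[OF this] show ?thesis by simp
qed

end

locale fkm = fk p \<Omega> F X P
  for p :: "real \<Rightarrow> 'a::topological_space \<Rightarrow> 'a measure" and \<Omega> :: "'w set"
    and F :: "real \<Rightarrow> 'w measure" and X :: "real \<Rightarrow> 'w \<Rightarrow> 'a" and P :: "'a \<Rightarrow> 'w measure" +
  fixes w :: "'a \<Rightarrow> real" and Bw t0 \<epsilon> :: real
  assumes w: "w \<in> borel_measurable borel" and wb: "\<And>y. \<bar>w y\<bar> \<le> Bw" and wpos: "\<And>y. 0 \<le> w y"
    and t0: "0 < t0" and eps: "0 < \<epsilon>"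
begin

definition "vf x = (1/t0) * (\<integral>s. indicator {0..t0} s * ptf p s w x \<partial>lborel)"
definition "vef x = vf x + \<epsilon>"
definition "gf x = (ptf p t0 w x - w x) / t0"
definition "Vf x = (1 / vef x) * gf x"
definition "BV = 1 / \<epsilon> * (2 * Bw / t0)"

lemma Bw0: "0 \<le> Bw" using wb[of undefined] by auto

lemma ptf_w_nonneg: "0 \<le> s \<Longrightarrow> 0 \<le> ptf p s w y"
  unfolding ptf_def using wpos by (simp add: integral_nonneg_AE)

lemma ptf_w_b: "0 \<le> s \<Longrightarrow> \<bar>ptf p s w y\<bar> \<le> Bw" by (rule ptf_bound[OF _ w wb])

lemma vf_alt: "vf y = (1/t0) * (\<integral>s. indicator {0..t0} s * ptf p (max 0 s) w y \<partial>lborel)"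
  unfolding vf_def by (intro arg_cong[where f="\<lambda>z. (1/t0) * z"] Bochner_Integration.integral_cong)
    (auto simp: indicator_def)

lemma vf_meas: "vf \<in> borel_measurable borel"
proof -
  have "(\<lambda>z. ptf p (max 0 (snd z)) w (fst z)) \<in> borel_measurable (borel \<Otimes>\<^sub>M lborel)"
  proof -
    have sn: "snd \<in> borel_measurable (borel \<Otimes>\<^sub>M lborel)" using measurable_snd[of "borel::'a measure" lborel] by simp
    have fs: "fst \<in> measurable (borel \<Otimes>\<^sub>M lborel) (borel::'a measure)" by (rule measurable_fst)
    show ?thesis using ptf_gen_meas[OF sn fs w] .
  qed
  moreover have "(\<lambda>z. indicator {0..t0} (snd z) :: real) \<in> borel_measurable (borel \<Otimes>\<^sub>M lborel)"
    by (rule measurable_compose[OF measurable_snd borel_measurable_indicator]) simp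
  ultimately have "(\<lambda>(y, s). indicator {0..t0} s * ptf p (max 0 s) w y) \<in> borel_measurable (borel \<Otimes>\<^sub>M lborel)"
    by (simp add: split_beta' borel_measurable_times)
  from lborel.borel_measurable_lebesgue_integral[OF this] show ?thesis
    unfolding vf_alt[abs_def] by simp
qed

lemma vf_bounds: "0 \<le> vf y" "vf y \<le> Bw"
proof -
  have pm: "(\<lambda>s. ptf p (max 0 s) w y) \<in> borel_measurable borel"
    using ptf_gen_meas[of "\<lambda>s. s" borel "\<lambda>_. y", OF _ _ w] by simp
  have i1: "integrable lborel (\<lambda>s. indicator {0..t0} s * ptf p (max 0 s) w y)"
  proof -
    have pm: "(\<lambda>s. ptf p (max 0 s) w y) \<in> borel_measurable borel"
      using ptf_gen_meas[of "\<lambda>s. s" borel "\<lambda>_. y", OF _ _ w] by simp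
    show ?thesis using pm ptf_w_b by (intro int_set[where c=0 and d=t0 and B=Bw]) auto
  qed
  have "0 \<le> (\<integral>s. indicator {0..t0} s * ptf p (max 0 s) w y \<partial>lborel)"
    using ptf_w_nonneg by (intro integral_nonneg_AE AE_I2) auto
  then show "0 \<le> vf y" unfolding vf_alt using t0 by simp
  have "(\<integral>s. indicator {0..t0} s * ptf p (max 0 s) w y \<partial>lborel) \<le> (\<integral>s. indicator {0..t0} s * Bw \<partial>lborel)"
    using i1 ptf_w_b pm by (intro integral_mono int_set[where c=0 and d=t0 and B=Bw]) (auto simp: indicator_def Bw0 abs_le_iff)
  also have "\<dots> = Bw * t0" using t0 by (simp add: mult.commute)
  finally show "vf y \<le> Bw" unfolding vf_alt using t0 by (simp add: field_simps)
qed

lemma vef_meas: "vef \<in> borel_measurable borel" unfolding vef_def[abs_def] using vf_meas by measurable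
lemma vef_ge: "\<epsilon> \<le> vef y" unfolding vef_def using vf_bounds by simp
lemma vef_b: "\<bar>vef y\<bar> \<le> Bw + \<epsilon>" unfolding vef_def using vf_bounds eps by simp

lemma gf_meas: "gf \<in> borel_measurable borel"
proof -
  have "ptf p t0 w \<in> borel_measurable borel" by (rule ptf_meas) (use t0 w in auto)
  then show ?thesis unfolding gf_def[abs_def] using w by measurable
qed
lemma gf_b: "\<bar>gf y\<bar> \<le> 2 * Bw / t0"
proof -
  have "\<bar>ptf p t0 w y - w y\<bar> \<le> 2 * Bw" using ptf_w_b[of t0 y] wb[of y] t0 by linarith
  then show ?thesis unfolding gf_def using t0 by (simp add: divide_right_mono)
qed

lemma Vf_meas: "Vf \<in> borel_measurable borel"
  unfolding Vf_def[abs_def] using vef_meas gf_meas by measurable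
lemma Vf_b: "\<bar>Vf y\<bar> \<le> BV"
proof -
  have "\<bar>1 / vef y\<bar> \<le> 1 / \<epsilon>" using vef_ge[of y] eps by (simp add: frac_le)
  then have "\<bar>1 / vef y * gf y\<bar> \<le> 1 / \<epsilon> * (2 * Bw / t0)" by (rule abs_mult_bound[OF _ gf_b])
  then show ?thesis unfolding Vf_def BV_def .
qed
lemma Vf_vef: "Vf y * vef y = gf y"
  unfolding Vf_def using vef_ge[of y] eps by simp

lemma K1: "0 \<le> a \<Longrightarrow> ptf p a vef y = vef y + (\<integral>s. indicator {0..a} s * ptf p s gf y \<partial>lborel)"
proof -
  assume a: "0 \<le> a"
  have "ptf p a vef y = ptf p a vf y + \<epsilon>"
    unfolding vef_def[abs_def] by (rule ptf_add_const[OF a vf_meas, where B=Bw]) (use vf_bounds in \<open>simp add: abs_le_iff\<close>)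
  also have "ptf p a vf y = vf y + (\<integral>s. indicator {0..a} s * ptf p s gf y \<partial>lborel)"
    unfolding vf_def[abs_def] gf_def[abs_def] by (rule v_ident[OF w wb t0 a])
  finally show ?thesis unfolding vef_def by simp
qed


definition "Hf t \<omega> r = Vf (X (max 0 (min t r)) \<omega>)"
definition "Gf t \<omega> r = gf (X (max 0 (min t r)) \<omega>)"
definition "Af t \<omega> r = (\<integral>y. indicator {0..r} y * Hf t \<omega> y \<partial>lborel)"
definition "Jf t \<omega> r = (\<integral>s. indicator {r..t} s * Gf t \<omega> s \<partial>lborel)"
definition "BG = 2 * Bw / t0"

lemma BV0: "0 \<le> BV" using Vf_b[of undefined] by auto
lemma BG0: "0 \<le> BG" unfolding BG_def using Bw0 t0 by simp
lemma Hf_b: "\<bar>Hf t \<omega> r\<bar> \<le> BV" unfolding Hf_def by (rule Vf_b)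
lemma Gf_b: "\<bar>Gf t \<omega> r\<bar> \<le> BG" unfolding Gf_def BG_def by (rule gf_b)

lemma Af_b: "0 \<le> t \<Longrightarrow> r \<in> {0..t} \<Longrightarrow> \<bar>Af t \<omega> r\<bar> \<le> BV * t"
proof -
  assume t: "0 \<le> t" and r: "r \<in> {0..t}"
  have "\<bar>Af t \<omega> r\<bar> \<le> BV * r" unfolding Af_def using r Hf_b by (intro Abound2) auto
  also have "\<dots> \<le> BV * t" using r BV0 by (intro mult_left_mono) auto
  finally show ?thesis .
qed

lemma Mf_b: "0 \<le> t \<Longrightarrow> r \<in> {0..t} \<Longrightarrow> \<bar>exp (- Af t \<omega> r)\<bar> \<le> exp (BV * t)"
  using Af_b[of t r \<omega>] by simp

lemma Jf_b: "0 \<le> t \<Longrightarrow> r \<in> {0..t} \<Longrightarrow> \<bar>Jf t \<omega> r\<bar> \<le> BG * t"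
proof -
  assume t: "0 \<le> t" and r: "r \<in> {0..t}"
  have "\<bar>Jf t \<omega> r\<bar> = \<bar>\<integral>s. indicator {r..t} s * Gf t \<omega> s \<partial>lborel\<bar>" unfolding Jf_def ..
  also have "\<dots> \<le> BG * t"
  proof (cases "integrable lborel (\<lambda>s. indicator {r..t} s * Gf t \<omega> s)")
    case True
    have i2: "integrable lborel (\<lambda>x. indicator {r..t} x * BG)"
      by (intro int_set[where c=r and d=t and B="\<bar>BG\<bar>"]) auto
    have "\<bar>\<integral>s. indicator {r..t} s * Gf t \<omega> s \<partial>lborel\<bar> \<le> (\<integral>s. \<bar>indicator {r..t} s * Gf t \<omega> s\<bar> \<partial>lborel)"
      by (rule integral_abs_bound)
    also have "\<dots> \<le> (\<integral>s. indicator {r..t} s * BG \<partial>lborel)"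
      using True i2 Gf_b by (intro integral_mono) (auto simp: indicator_def)
    also have "\<dots> = BG * (t - r)" using r by (simp add: mult.commute)
    also have "\<dots> \<le> BG * t" using r BG0 by (intro mult_left_mono) auto
    finally show ?thesis .
  next
    case False
    then show ?thesis using BG0 t by (simp add: not_integrable_integral_eq)
  qed
  finally show ?thesis .
qed

lemma const_F: "0 \<le> t \<Longrightarrow> \<omega> \<in> \<Omega> \<Longrightarrow> (\<lambda>_. \<omega>) \<in> measurable N (F t)"
  using F_space by (intro measurable_const) auto

lemma Hf_path: assumes t: "0 \<le> t" and om: "\<omega> \<in> \<Omega>" shows "Hf t \<omega> \<in> borel_measurable borel"
  using measurable_compose[OF Xc_meas[OF t measurable_ident_sets[OF refl] const_F[OF t om]] Vf_meas]
  unfolding Hf_def[abs_def] by simp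

lemma Gf_path: assumes t: "0 \<le> t" and om: "\<omega> \<in> \<Omega>" shows "Gf t \<omega> \<in> borel_measurable borel"
  using measurable_compose[OF Xc_meas[OF t measurable_ident_sets[OF refl] const_F[OF t om]] gf_meas]
  unfolding Gf_def[abs_def] by simp

lemma fst_F: assumes "0 \<le> t" shows "fst \<in> measurable (P x \<Otimes>\<^sub>M lborel) (F t)"
  using measurable_compose[OF measurable_fst[of "P x" lborel] id_F[OF assms, of x]] by simp
lemma snd_b: "snd \<in> borel_measurable (P x \<Otimes>\<^sub>M lborel)"
  using measurable_snd[of "P x" lborel] by simp

lemma HP: "0 \<le> t \<Longrightarrow> (\<lambda>z. Hf t (fst z) (snd z)) \<in> borel_measurable (P x \<Otimes>\<^sub>M lborel)"
  unfolding Hf_def using measurable_compose[OF Xc_meas[OF _ snd_b fst_F] Vf_meas] by simp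
lemma GP: "0 \<le> t \<Longrightarrow> (\<lambda>z. Gf t (fst z) (snd z)) \<in> borel_measurable (P x \<Otimes>\<^sub>M lborel)"
  unfolding Gf_def using measurable_compose[OF Xc_meas[OF _ snd_b fst_F] gf_meas] by simp
lemma AP: "0 \<le> t \<Longrightarrow> (\<lambda>z. Af t (fst z) (snd z)) \<in> borel_measurable (P x \<Otimes>\<^sub>M lborel)"
  unfolding Af_def Hf_def using Aint_gen[OF _ _ snd_b fst_F Vf_meas, of t "\<lambda>_. 0"] by simp
lemma JP: "0 \<le> t \<Longrightarrow> (\<lambda>z. Jf t (fst z) (snd z)) \<in> borel_measurable (P x \<Otimes>\<^sub>M lborel)"
  unfolding Jf_def Gf_def using Aint_gen[OF _ snd_b _ fst_F gf_meas, of t "\<lambda>_. t"] by simp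

lemma Af_F: assumes t: "0 \<le> t" and r: "r \<in> {0..t}" shows "(\<lambda>\<omega>. Af t \<omega> r) \<in> borel_measurable (F r)"
proof -
  have "(\<lambda>\<omega>. \<integral>y. indicator {0..r} y * Vf (X (max 0 (min r y)) \<omega>) \<partial>lborel) \<in> borel_measurable (F r)"
    using Aint_gen[of r "\<lambda>_. 0" "F r" "\<lambda>_. r" "\<lambda>\<omega>. \<omega>" Vf] r Vf_meas by simp
  moreover have "Af t \<omega> r = (\<integral>y. indicator {0..r} y * Vf (X (max 0 (min r y)) \<omega>) \<partial>lborel)" for \<omega>
    unfolding Af_def Hf_def using r
    by (intro Bochner_Integration.integral_cong) (auto simp: indicator_def min_def max_def)
  ultimately show ?thesis by simp
qed

lemma Y_F: assumes t: "0 \<le> t" and r: "r \<in> {0..t}"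
  shows "(\<lambda>\<omega>. Hf t \<omega> r * exp (- Af t \<omega> r)) \<in> borel_measurable (F r)"
proof -
  have "(\<lambda>\<omega>. Vf (X r \<omega>)) \<in> borel_measurable (F r)"
    using measurable_compose[OF X_F[of r r] Vf_meas] r by simp
  moreover have "Hf t \<omega> r = Vf (X r \<omega>)" for \<omega> unfolding Hf_def using r by simp
  ultimately show ?thesis using Af_F[OF t r] by simp
qed


lemma vefX: "0 \<le> s \<Longrightarrow> (\<lambda>\<omega>. vef (X s \<omega>)) \<in> borel_measurable (P x)"
  using measurable_compose[OF X_P vef_meas] by blast

lemma step4:
  assumes t: "0 \<le> t" and r: "r \<in> {0..t}"
  shows "(\<integral>\<omega>. (Hf t \<omega> r * exp (- Af t \<omega> r)) * vef (X t \<omega>) \<partial>P x)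
       = (\<integral>\<omega>. Gf t \<omega> r * exp (- Af t \<omega> r) + (Hf t \<omega> r * exp (- Af t \<omega> r)) * Jf t \<omega> r \<partial>P x)"
proof -
  define Y where "Y \<omega> = Hf t \<omega> r * exp (- Af t \<omega> r)" for \<omega>
  have r0: "0 \<le> r" and rt: "r \<le> t" using r by auto
  have YF: "Y \<in> borel_measurable (F r)" unfolding Y_def[abs_def] by (rule Y_F[OF t r])
  have YP: "Y \<in> borel_measurable (P x)" by (rule F_P[OF r0 YF])
  have Yb: "\<bar>Y \<omega>\<bar> \<le> BV * exp (BV * t)" for \<omega>
    unfolding Y_def by (rule abs_mult_bound[OF Hf_b Mf_b[OF t r]])
  have vefb: "\<bar>vef y\<bar> \<le> Bw + \<epsilon>" for y by (rule vef_b)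
  have Xr: "X r \<in> measurable (P x) borel" by (rule X_P[OF r0])
  define Q where "Q y = (\<integral>s. indicator {0..t - r} s * ptf p s gf y \<partial>lborel)" for y
  have "(\<integral>\<omega>. Y \<omega> * vef (X t \<omega>) \<partial>P x) = (\<integral>\<omega>. Y \<omega> * vef (X (r + (t - r)) \<omega>) \<partial>P x)" by simp
  also have "\<dots> = (\<integral>\<omega>. Y \<omega> * ptf p (t - r) vef (X r \<omega>) \<partial>P x)"
    by (rule markov[OF r0 _ YF Yb vef_meas vefb]) (use rt in simp)
  also have "\<dots> = (\<integral>\<omega>. Y \<omega> * vef (X r \<omega>) + Y \<omega> * (ptf p (t - r) vef (X r \<omega>) - vef (X r \<omega>)) \<partial>P x)"
    by (simp add: algebra_simps)
  also have "\<dots> = (\<integral>\<omega>. Y \<omega> * vef (X r \<omega>) \<partial>P x) + (\<integral>\<omega>. Y \<omega> * (ptf p (t - r) vef (X r \<omega>) - vef (X r \<omega>)) \<partial>P x)"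
  proof (rule Bochner_Integration.integral_add)
    show "integrable (P x) (\<lambda>\<omega>. Y \<omega> * vef (X r \<omega>))"
      using YP vefX[OF r0] by (intro int_bounded[where C="BV * exp (BV * t) * (Bw + \<epsilon>)"] abs_mult_bound Yb vefb) auto
    have pm: "ptf p (t - r) vef \<in> borel_measurable borel" using rt by (intro ptf_meas vef_meas) simp
    have pb: "\<bar>ptf p (t - r) vef y - vef y\<bar> \<le> 2 * (Bw + \<epsilon>)" for y
    proof -
      have tr: "0 \<le> t - r" using rt by simp
      have "\<bar>ptf p (t - r) vef y - vef y\<bar> \<le> \<bar>ptf p (t - r) vef y\<bar> + \<bar>vef y\<bar>"
        by (rule abs_triangle_ineq4)
      also have "\<dots> \<le> (Bw + \<epsilon>) + (Bw + \<epsilon>)"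
        by (rule add_mono[OF ptf_bound[OF tr vef_meas vefb] vefb])
      finally show ?thesis by simp
    qed
    show "integrable (P x) (\<lambda>\<omega>. Y \<omega> * (ptf p (t - r) vef (X r \<omega>) - vef (X r \<omega>)))"
      using YP measurable_compose[OF Xr pm] vefX[OF r0]
      by (intro int_bounded[where C="BV * exp (BV * t) * (2 * (Bw + \<epsilon>))"] abs_mult_bound Yb pb) auto
  qed
  also have "(\<integral>\<omega>. Y \<omega> * vef (X r \<omega>) \<partial>P x) = (\<integral>\<omega>. Gf t \<omega> r * exp (- Af t \<omega> r) \<partial>P x)"
  proof (intro Bochner_Integration.integral_cong refl)
    fix \<omega>
    have "Y \<omega> * vef (X r \<omega>) = (Vf (X r \<omega>) * vef (X r \<omega>)) * exp (- Af t \<omega> r)"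
      unfolding Y_def Hf_def using r by simp
    also have "\<dots> = Gf t \<omega> r * exp (- Af t \<omega> r)" unfolding Vf_vef Gf_def using r by simp
    finally show "Y \<omega> * vef (X r \<omega>) = Gf t \<omega> r * exp (- Af t \<omega> r)" .
  qed
  also have "(\<integral>\<omega>. Y \<omega> * (ptf p (t - r) vef (X r \<omega>) - vef (X r \<omega>)) \<partial>P x) = (\<integral>\<omega>. Y \<omega> * Jf t \<omega> r \<partial>P x)"
  proof -
    have tr: "0 \<le> t - r" using rt by simp
    have gfb: "\<bar>gf y\<bar> \<le> BG" for y unfolding BG_def by (rule gf_b)
    have pgb: "\<bar>ptf p s gf y\<bar> \<le> BG" if "0 \<le> s" for s y by (rule ptf_bound[OF that gf_meas gfb])
    have fstP: "fst \<in> measurable (P x \<Otimes>\<^sub>M lborel) (P x)" by (rule measurable_fst)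
    have indm: "(\<lambda>z. indicator {a..b} (snd z) :: real) \<in> borel_measurable (P x \<Otimes>\<^sub>M lborel)" for a b :: real
      using measurable_compose[OF snd_b borel_measurable_indicator[of "{a..b}" borel]] by simp
    have "(\<integral>\<omega>. Y \<omega> * (ptf p (t - r) vef (X r \<omega>) - vef (X r \<omega>)) \<partial>P x)
        = (\<integral>\<omega>. (\<integral>s. indicator {0..t - r} s * (Y \<omega> * ptf p (max 0 s) gf (X r \<omega>)) \<partial>lborel) \<partial>P x)"
    proof (intro Bochner_Integration.integral_cong refl)
      fix \<omega>
      have "Y \<omega> * (ptf p (t - r) vef (X r \<omega>) - vef (X r \<omega>)) = Y \<omega> * (\<integral>s. indicator {0..t - r} s * ptf p s gf (X r \<omega>) \<partial>lborel)"
        using K1[OF tr, of "X r \<omega>"] by simp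
      also have "\<dots> = (\<integral>s. Y \<omega> * (indicator {0..t - r} s * ptf p s gf (X r \<omega>)) \<partial>lborel)" by simp
      also have "\<dots> = (\<integral>s. indicator {0..t - r} s * (Y \<omega> * ptf p (max 0 s) gf (X r \<omega>)) \<partial>lborel)"
        by (intro Bochner_Integration.integral_cong) (auto simp: indicator_def)
      finally show "Y \<omega> * (ptf p (t - r) vef (X r \<omega>) - vef (X r \<omega>)) = (\<integral>s. indicator {0..t - r} s * (Y \<omega> * ptf p (max 0 s) gf (X r \<omega>)) \<partial>lborel)" .
    qed
    also have "\<dots> = (\<integral>s. (\<integral>\<omega>. indicator {0..t - r} s * (Y \<omega> * ptf p (max 0 s) gf (X r \<omega>)) \<partial>P x) \<partial>lborel)"
    proof -
      let ?f = "\<lambda>(\<omega>, s). indicator {0..t - r} s * (Y \<omega> * ptf p (max 0 s) gf (X r \<omega>))"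
      have m1: "(\<lambda>z. ptf p (max 0 (snd z)) gf (X r (fst z))) \<in> borel_measurable (P x \<Otimes>\<^sub>M lborel)"
        by (rule ptf_gen_meas[OF snd_b measurable_compose[OF fstP Xr] gf_meas])
      have m2: "(\<lambda>z. Y (fst z)) \<in> borel_measurable (P x \<Otimes>\<^sub>M lborel)" by (rule measurable_compose[OF fstP YP])
      have "(\<lambda>z. indicator {0..t - r} (snd z) * (Y (fst z) * ptf p (max 0 (snd z)) gf (X r (fst z)))) \<in> borel_measurable (P x \<Otimes>\<^sub>M lborel)"
        by (intro borel_measurable_times indm m1 m2)
      then have fm: "?f \<in> borel_measurable (P x \<Otimes>\<^sub>M lborel)" by (simp add: split_beta')
      have fb: "\<bar>?f (\<omega>, s)\<bar> \<le> BV * exp (BV * t) * BG" for \<omega> s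
        using abs_mult_bound[OF Yb pgb[of "max 0 s"]] BV0 BG0 by (auto simp: indicator_def)
      have fz: "?f (\<omega>, s) = 0" if "s \<notin> {0..t - r}" for \<omega> s using that by simp
      from fubini_gen[OF P_fin fm fb fz] show ?thesis by simp
    qed
    also have "\<dots> = (\<integral>s. indicator {0..t - r} s * (\<integral>\<omega>. Y \<omega> * gf (X (r + s) \<omega>) \<partial>P x) \<partial>lborel)"
    proof (intro Bochner_Integration.integral_cong refl)
      fix s
      show "(\<integral>\<omega>. indicator {0..t - r} s * (Y \<omega> * ptf p (max 0 s) gf (X r \<omega>)) \<partial>P x)
          = indicator {0..t - r} s * (\<integral>\<omega>. Y \<omega> * gf (X (r + s) \<omega>) \<partial>P x)"
      proof (cases "s \<in> {0..t - r}")
        case True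
        then have s0: "0 \<le> s" by simp
        have "(\<integral>\<omega>. Y \<omega> * gf (X (r + s) \<omega>) \<partial>P x) = (\<integral>\<omega>. Y \<omega> * ptf p s gf (X r \<omega>) \<partial>P x)"
          by (rule markov[OF r0 s0 YF Yb gf_meas gfb])
        then show ?thesis using True s0 by simp
      qed simp
    qed
    also have "\<dots> = (\<integral>s. indicator {r..t} s * (\<integral>\<omega>. Y \<omega> * gf (X s \<omega>) \<partial>P x) \<partial>lborel)"
      using lborel_integral_real_affine[of 1 "\<lambda>s. indicator {r..t} s * (\<integral>\<omega>. Y \<omega> * gf (X s \<omega>) \<partial>P x)" r]
      by (simp add: indicator_def le_diff_eq add.commute)
    also have "\<dots> = (\<integral>s. (\<integral>\<omega>. indicator {r..t} s * (Y \<omega> * Gf t \<omega> s) \<partial>P x) \<partial>lborel)"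
    proof (intro Bochner_Integration.integral_cong refl)
      fix s
      show "indicator {r..t} s * (\<integral>\<omega>. Y \<omega> * gf (X s \<omega>) \<partial>P x) = (\<integral>\<omega>. indicator {r..t} s * (Y \<omega> * Gf t \<omega> s) \<partial>P x)"
      proof (cases "s \<in> {r..t}")
        case True
        then have "Gf t \<omega> s = gf (X s \<omega>)" for \<omega> unfolding Gf_def using r0 by simp
        then show ?thesis using True by simp
      qed simp
    qed
    also have "\<dots> = (\<integral>\<omega>. (\<integral>s. indicator {r..t} s * (Y \<omega> * Gf t \<omega> s) \<partial>lborel) \<partial>P x)"
    proof -
      let ?f = "\<lambda>(\<omega>, s). indicator {r..t} s * (Y \<omega> * Gf t \<omega> s)"
      have m2: "(\<lambda>z. Y (fst z)) \<in> borel_measurable (P x \<Otimes>\<^sub>M lborel)" by (rule measurable_compose[OF fstP YP])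
      have "(\<lambda>z. indicator {r..t} (snd z) * (Y (fst z) * Gf t (fst z) (snd z))) \<in> borel_measurable (P x \<Otimes>\<^sub>M lborel)"
        by (intro borel_measurable_times indm GP[OF t] m2)
      then have fm: "?f \<in> borel_measurable (P x \<Otimes>\<^sub>M lborel)" by (simp add: split_beta')
      have fb: "\<bar>?f (\<omega>, s)\<bar> \<le> BV * exp (BV * t) * BG" for \<omega> s
        using abs_mult_bound[OF Yb Gf_b] BV0 BG0 by (auto simp: indicator_def)
      have fz: "?f (\<omega>, s) = 0" if "s \<notin> {r..t}" for \<omega> s using that by simp
      from fubini_gen[OF P_fin fm fb fz] show ?thesis by simp
    qed
    also have "\<dots> = (\<integral>\<omega>. Y \<omega> * Jf t \<omega> r \<partial>P x)"
    proof (intro Bochner_Integration.integral_cong refl)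
      fix \<omega>
      have "(\<integral>s. indicator {r..t} s * (Y \<omega> * Gf t \<omega> s) \<partial>lborel) = (\<integral>s. Y \<omega> * (indicator {r..t} s * Gf t \<omega> s) \<partial>lborel)"
        by (simp add: mult.left_commute)
      also have "\<dots> = Y \<omega> * Jf t \<omega> r" unfolding Jf_def by (rule integral_mult_right_zero)
      finally show "(\<integral>s. indicator {r..t} s * (Y \<omega> * Gf t \<omega> s) \<partial>lborel) = Y \<omega> * Jf t \<omega> r" .
    qed
    finally show ?thesis .
  qed
  finally have eq: "(\<integral>\<omega>. Y \<omega> * vef (X t \<omega>) \<partial>P x)
      = (\<integral>\<omega>. Gf t \<omega> r * exp (- Af t \<omega> r) \<partial>P x) + (\<integral>\<omega>. Y \<omega> * Jf t \<omega> r \<partial>P x)" .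
  have GM: "integrable (P x) (\<lambda>\<omega>. Gf t \<omega> r * exp (- Af t \<omega> r))"
  proof -
    have "Gf t \<omega> r = gf (X r \<omega>)" for \<omega> unfolding Gf_def using r by simp
    moreover have "(\<lambda>\<omega>. gf (X r \<omega>)) \<in> borel_measurable (P x)" using measurable_compose[OF Xr gf_meas] .
    moreover have "(\<lambda>\<omega>. Af t \<omega> r) \<in> borel_measurable (P x)" by (rule F_P[OF r0 Af_F[OF t r]])
    ultimately have "(\<lambda>\<omega>. Gf t \<omega> r * exp (- Af t \<omega> r)) \<in> borel_measurable (P x)" by simp
    then show ?thesis by (intro int_bounded[where C="BG * exp (BV * t)"] abs_mult_bound Gf_b Mf_b[OF t r])
  qed
  have YJ: "integrable (P x) (\<lambda>\<omega>. Y \<omega> * Jf t \<omega> r)"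
  proof -
    have "(\<lambda>\<omega>. Jf t \<omega> r) \<in> borel_measurable (P x)"
      unfolding Jf_def Gf_def using Aint_gen[OF t _ _ id_F[OF t, of x] gf_meas, where L="\<lambda>_. r" and U="\<lambda>_. t"] by simp
    then show ?thesis using YP by (intro int_bounded[where C="BV * exp (BV * t) * (BG * t)"] abs_mult_bound Yb Jf_b[OF t r]) auto
  qed
  show ?thesis unfolding Y_def[symmetric] using eq Bochner_Integration.integral_add[OF GM YJ] by simp
qed


lemma Af_path: assumes t: "0 \<le> t" and om: "\<omega> \<in> \<Omega>" shows "Af t \<omega> \<in> borel_measurable borel"
  unfolding Af_def[abs_def] by (rule Aint_meas[OF Hf_path[OF t om]])

lemma Jf_path: assumes t: "0 \<le> t" and om: "\<omega> \<in> \<Omega>" shows "Jf t \<omega> \<in> borel_measurable borel"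
  unfolding Jf_def[abs_def] Gf_def
  using Aint_gen[OF t measurable_ident_sets[OF refl] _ const_F[OF t om] gf_meas, where U="\<lambda>_. t"] by simp

lemma S6:
  assumes t: "0 \<le> t" and om: "\<omega> \<in> \<Omega>"
  shows "(\<integral>r. indicator {0..t} r * (Gf t \<omega> r * exp (- Af t \<omega> r) + Hf t \<omega> r * exp (- Af t \<omega> r) * Jf t \<omega> r) \<partial>lborel)
       = (\<integral>r. indicator {0..t} r * Gf t \<omega> r \<partial>lborel)"
proof -
  have Gm: "Gf t \<omega> \<in> borel_measurable borel" by (rule Gf_path[OF t om])
  have Hm: "Hf t \<omega> \<in> borel_measurable borel" by (rule Hf_path[OF t om])
  have Am: "Af t \<omega> \<in> borel_measurable borel" by (rule Af_path[OF t om])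
  have Jm: "Jf t \<omega> \<in> borel_measurable borel" by (rule Jf_path[OF t om])
  have i1: "integrable lborel (\<lambda>r. indicator {0..t} r * (Gf t \<omega> r * exp (- Af t \<omega> r)))"
    using Gm Am by (intro int_set[where c=0 and d=t and B="BG * exp (BV * t)"] abs_mult_bound Gf_b Mf_b[OF t])
      (auto intro!: borel_measurable_times)
  have i2: "integrable lborel (\<lambda>r. indicator {0..t} r * (Hf t \<omega> r * exp (- Af t \<omega> r) * Jf t \<omega> r))"
    using Hm Am Jm by (intro int_set[where c=0 and d=t and B="BV * exp (BV * t) * (BG * t)"] abs_mult_bound Hf_b Mf_b[OF t] Jf_b[OF t])
      (auto intro!: borel_measurable_times)
  have i3: "integrable lborel (\<lambda>r. indicator {0..t} r * (Gf t \<omega> r * (1 - exp (- Af t \<omega> r))))"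
  proof -
    have "\<bar>1 - exp (- Af t \<omega> r)\<bar> \<le> 1 + exp (BV * t)" if "r \<in> {0..t}" for r
    proof -
      have e: "exp (- Af t \<omega> r) \<le> exp (BV * t)" using Mf_b[OF t that, of \<omega>] by simp
      have p: "0 < exp (- Af t \<omega> r)" by simp
      show ?thesis unfolding abs_le_iff using e p by linarith
    qed
    then show ?thesis
      using Gm Am by (intro int_set[where c=0 and d=t and B="BG * (1 + exp (BV * t))"] abs_mult_bound Gf_b)
        (auto intro!: borel_measurable_times borel_measurable_diff)
  qed
  have "(\<integral>r. indicator {0..t} r * (Gf t \<omega> r * exp (- Af t \<omega> r) + Hf t \<omega> r * exp (- Af t \<omega> r) * Jf t \<omega> r) \<partial>lborel)
      = (\<integral>r. indicator {0..t} r * (Gf t \<omega> r * exp (- Af t \<omega> r)) + indicator {0..t} r * (Hf t \<omega> r * exp (- Af t \<omega> r) * Jf t \<omega> r) \<partial>lborel)"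
    by (simp add: distrib_left)
  also have "\<dots> = (\<integral>r. indicator {0..t} r * (Gf t \<omega> r * exp (- Af t \<omega> r)) \<partial>lborel)
      + (\<integral>r. indicator {0..t} r * (Hf t \<omega> r * exp (- Af t \<omega> r) * Jf t \<omega> r) \<partial>lborel)"
    by (rule Bochner_Integration.integral_add[OF i1 i2])
  also have "(\<integral>r. indicator {0..t} r * (Hf t \<omega> r * exp (- Af t \<omega> r) * Jf t \<omega> r) \<partial>lborel)
      = (\<integral>r. indicator {0..t} r * (Gf t \<omega> r * (1 - exp (- Af t \<omega> r))) \<partial>lborel)"
    unfolding Jf_def Af_def[abs_def] by (rule triangle[OF Hm Hf_b Gm Gf_b t])
  also have "(\<integral>r. indicator {0..t} r * (Gf t \<omega> r * exp (- Af t \<omega> r)) \<partial>lborel) + \<dots>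
      = (\<integral>r. indicator {0..t} r * (Gf t \<omega> r * exp (- Af t \<omega> r)) + indicator {0..t} r * (Gf t \<omega> r * (1 - exp (- Af t \<omega> r))) \<partial>lborel)"
    by (rule Bochner_Integration.integral_add[OF i1 i3, symmetric])
  also have "\<dots> = (\<integral>r. indicator {0..t} r * Gf t \<omega> r \<partial>lborel)"
    by (intro Bochner_Integration.integral_cong refl) (simp add: algebra_simps)
  finally show ?thesis .
qed

lemma main_fk:
  assumes t: "0 \<le> t"
  shows "(\<integral>\<omega>. vef (X t \<omega>) * exp (- Af t \<omega> t) \<partial>P x) = vef x"
proof -
  have fstP: "fst \<in> measurable (P x \<Otimes>\<^sub>M lborel) (P x)" by (rule measurable_fst)
  have indm: "(\<lambda>z. indicator {a..b} (snd z) :: real) \<in> borel_measurable (P x \<Otimes>\<^sub>M lborel)" for a b :: real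
    using measurable_compose[OF snd_b borel_measurable_indicator[of "{a..b}" borel]] by simp
  have vefb: "\<bar>vef y\<bar> \<le> Bw + \<epsilon>" for y by (rule vef_b)
  have EB: "0 \<le> exp (BV * t)" by simp
  define I1 where "I1 \<omega> = (\<integral>r. indicator {0..t} r * (Hf t \<omega> r * exp (- Af t \<omega> r)) \<partial>lborel)" for \<omega>
  have MP: "(\<lambda>z. Hf t (fst z) (snd z) * exp (- Af t (fst z) (snd z))) \<in> borel_measurable (P x \<Otimes>\<^sub>M lborel)"
    using HP[OF t] AP[OF t] by (intro borel_measurable_times) auto
  have I1m: "I1 \<in> borel_measurable (P x)"
  proof -
    have "(\<lambda>(\<omega>, r). indicator {0..t} r * (Hf t \<omega> r * exp (- Af t \<omega> r))) \<in> borel_measurable (P x \<Otimes>\<^sub>M lborel)"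
      using borel_measurable_times[OF indm MP] by (simp add: split_beta')
    from lborel.borel_measurable_lebesgue_integral[OF this] show ?thesis unfolding I1_def[abs_def] by simp
  qed
  have I1b: "\<bar>I1 \<omega>\<bar> \<le> (BV * exp (BV * t)) * t" for \<omega>
    unfolding I1_def using abs_mult_bound[OF Hf_b Mf_b[OF t]] by (intro Abound2[OF t]) auto
  have S1: "(\<integral>\<omega>. vef (X t \<omega>) * exp (- Af t \<omega> t) \<partial>P x) = (\<integral>\<omega>. vef (X t \<omega>) - vef (X t \<omega>) * I1 \<omega> \<partial>P x)"
  proof (intro Bochner_Integration.integral_cong refl)
    fix \<omega> assume "\<omega> \<in> space (P x)"
    then have om: "\<omega> \<in> \<Omega>" by (simp add: P_space)
    have eq: "I1 \<omega> = 1 - exp (- Af t \<omega> t)"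
      unfolding I1_def Af_def[abs_def] by (rule duhamel[OF Hf_path[OF t om] Hf_b t])
    show "vef (X t \<omega>) * exp (- Af t \<omega> t) = vef (X t \<omega>) - vef (X t \<omega>) * I1 \<omega>"
      by (subst eq) (simp add: right_diff_distrib)
  qed
  also have "\<dots> = (\<integral>\<omega>. vef (X t \<omega>) \<partial>P x) - (\<integral>\<omega>. vef (X t \<omega>) * I1 \<omega> \<partial>P x)"
  proof (rule Bochner_Integration.integral_diff)
    show "integrable (P x) (\<lambda>\<omega>. vef (X t \<omega>))" using vefX[OF t] vefb by (intro int_bounded) auto
    show "integrable (P x) (\<lambda>\<omega>. vef (X t \<omega>) * I1 \<omega>)"
      using vefX[OF t] I1m by (intro int_bounded[where C="(Bw + \<epsilon>) * ((BV * exp (BV * t)) * t)"] abs_mult_bound vefb I1b) auto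
  qed
  also have "(\<integral>\<omega>. vef (X t \<omega>) \<partial>P x) = ptf p t vef x" by (rule expect_X[OF t vef_meas vefb])
  also have "(\<integral>\<omega>. vef (X t \<omega>) * I1 \<omega> \<partial>P x) = (\<integral>r. ptf p r gf x * indicator {0..t} r \<partial>lborel)"
  proof -
    have vXm: "(\<lambda>z. vef (X t (fst z))) \<in> borel_measurable (P x \<Otimes>\<^sub>M lborel)"
      by (rule measurable_compose[OF fstP vefX[OF t]])
    have JPt: "(\<lambda>z. Jf t (fst z) (snd z)) \<in> borel_measurable (P x \<Otimes>\<^sub>M lborel)" by (rule JP[OF t])
    have GPt: "(\<lambda>z. Gf t (fst z) (snd z)) \<in> borel_measurable (P x \<Otimes>\<^sub>M lborel)" by (rule GP[OF t])
    have "(\<integral>\<omega>. vef (X t \<omega>) * I1 \<omega> \<partial>P x)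
        = (\<integral>\<omega>. (\<integral>r. indicator {0..t} r * ((Hf t \<omega> r * exp (- Af t \<omega> r)) * vef (X t \<omega>)) \<partial>lborel) \<partial>P x)"
    proof (intro Bochner_Integration.integral_cong refl)
      fix \<omega>
      have "vef (X t \<omega>) * I1 \<omega> = (\<integral>r. vef (X t \<omega>) * (indicator {0..t} r * (Hf t \<omega> r * exp (- Af t \<omega> r))) \<partial>lborel)"
        unfolding I1_def by (rule integral_mult_right_zero[symmetric])
      then show "vef (X t \<omega>) * I1 \<omega> = (\<integral>r. indicator {0..t} r * ((Hf t \<omega> r * exp (- Af t \<omega> r)) * vef (X t \<omega>)) \<partial>lborel)"
        by (simp add: ac_simps)
    qed
    also have "\<dots> = (\<integral>r. (\<integral>\<omega>. indicator {0..t} r * ((Hf t \<omega> r * exp (- Af t \<omega> r)) * vef (X t \<omega>)) \<partial>P x) \<partial>lborel)"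
    proof -
      let ?f = "\<lambda>(\<omega>, r). indicator {0..t} r * ((Hf t \<omega> r * exp (- Af t \<omega> r)) * vef (X t \<omega>))"
      have "(\<lambda>z. indicator {0..t} (snd z) * ((Hf t (fst z) (snd z) * exp (- Af t (fst z) (snd z))) * vef (X t (fst z))))
          \<in> borel_measurable (P x \<Otimes>\<^sub>M lborel)"
        by (intro borel_measurable_times indm MP vXm)
      then have fm: "?f \<in> borel_measurable (P x \<Otimes>\<^sub>M lborel)" by (simp add: split_beta')
      have fb: "\<bar>?f (\<omega>, r)\<bar> \<le> BV * exp (BV * t) * (Bw + \<epsilon>)" for \<omega> r
      proof (cases "r \<in> {0..t}")
        case True
        then show ?thesis using abs_mult_bound[OF abs_mult_bound[OF Hf_b Mf_b[OF t True]] vefb] by simp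
      next
        case False
        then show ?thesis using BV0 Bw0 eps by simp
      qed
      have fz: "?f (\<omega>, r) = 0" if "r \<notin> {0..t}" for \<omega> r using that by simp
      from fubini_gen[OF P_fin fm fb fz] show ?thesis by simp
    qed
    also have "\<dots> = (\<integral>r. (\<integral>\<omega>. indicator {0..t} r * (Gf t \<omega> r * exp (- Af t \<omega> r) + Hf t \<omega> r * exp (- Af t \<omega> r) * Jf t \<omega> r) \<partial>P x) \<partial>lborel)"
    proof (rule Bochner_Integration.integral_cong[OF refl])
      fix r
      show "(\<integral>\<omega>. indicator {0..t} r * ((Hf t \<omega> r * exp (- Af t \<omega> r)) * vef (X t \<omega>)) \<partial>P x)
          = (\<integral>\<omega>. indicator {0..t} r * (Gf t \<omega> r * exp (- Af t \<omega> r) + Hf t \<omega> r * exp (- Af t \<omega> r) * Jf t \<omega> r) \<partial>P x)"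
      proof (cases "r \<in> {0..t}")
        case True
        then show ?thesis using step4[OF t True] by simp
      qed simp
    qed
    also have "\<dots> = (\<integral>\<omega>. (\<integral>r. indicator {0..t} r * (Gf t \<omega> r * exp (- Af t \<omega> r) + Hf t \<omega> r * exp (- Af t \<omega> r) * Jf t \<omega> r) \<partial>lborel) \<partial>P x)"
    proof -
      let ?f = "\<lambda>(\<omega>, r). indicator {0..t} r * (Gf t \<omega> r * exp (- Af t \<omega> r) + Hf t \<omega> r * exp (- Af t \<omega> r) * Jf t \<omega> r)"
      have "(\<lambda>z. indicator {0..t} (snd z) * (Gf t (fst z) (snd z) * exp (- Af t (fst z) (snd z))
              + Hf t (fst z) (snd z) * exp (- Af t (fst z) (snd z)) * Jf t (fst z) (snd z)))
          \<in> borel_measurable (P x \<Otimes>\<^sub>M lborel)"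
        using AP[OF t] by (intro borel_measurable_times borel_measurable_add indm MP GPt JPt) auto
      then have fm: "?f \<in> borel_measurable (P x \<Otimes>\<^sub>M lborel)" by (simp add: split_beta')
      have fb: "\<bar>?f (\<omega>, r)\<bar> \<le> BG * exp (BV * t) + BV * exp (BV * t) * (BG * t)" for \<omega> r
      proof (cases "r \<in> {0..t}")
        case True
        have "\<bar>Gf t \<omega> r * exp (- Af t \<omega> r) + Hf t \<omega> r * exp (- Af t \<omega> r) * Jf t \<omega> r\<bar>
            \<le> \<bar>Gf t \<omega> r * exp (- Af t \<omega> r)\<bar> + \<bar>Hf t \<omega> r * exp (- Af t \<omega> r) * Jf t \<omega> r\<bar>"
          by (rule abs_triangle_ineq)
        also have "\<dots> \<le> BG * exp (BV * t) + BV * exp (BV * t) * (BG * t)"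
          by (intro add_mono abs_mult_bound Gf_b Mf_b[OF t True] Hf_b Jf_b[OF t True])
        finally show ?thesis using True by simp
      next
        case False
        then show ?thesis using BV0 BG0 t by simp
      qed
      have fz: "?f (\<omega>, r) = 0" if "r \<notin> {0..t}" for \<omega> r using that by simp
      from fubini_gen[OF P_fin fm fb fz] show ?thesis by simp
    qed
    also have "\<dots> = (\<integral>\<omega>. (\<integral>r. indicator {0..t} r * Gf t \<omega> r \<partial>lborel) \<partial>P x)"
    proof (rule Bochner_Integration.integral_cong[OF refl])
      fix \<omega> assume "\<omega> \<in> space (P x)"
      then have om: "\<omega> \<in> \<Omega>" by (simp add: P_space)
      show "(\<integral>r. indicator {0..t} r * (Gf t \<omega> r * exp (- Af t \<omega> r) + Hf t \<omega> r * exp (- Af t \<omega> r) * Jf t \<omega> r) \<partial>lborel)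
          = (\<integral>r. indicator {0..t} r * Gf t \<omega> r \<partial>lborel)"
        by (rule S6[OF t om])
    qed
    also have "\<dots> = (\<integral>r. (\<integral>\<omega>. indicator {0..t} r * Gf t \<omega> r \<partial>P x) \<partial>lborel)"
    proof -
      let ?f = "\<lambda>(\<omega>, r). indicator {0..t} r * Gf t \<omega> r"
      have "(\<lambda>z. indicator {0..t} (snd z) * Gf t (fst z) (snd z)) \<in> borel_measurable (P x \<Otimes>\<^sub>M lborel)"
        by (intro borel_measurable_times indm GPt)
      then have fm: "?f \<in> borel_measurable (P x \<Otimes>\<^sub>M lborel)" by (simp add: split_beta')
      have fb: "\<bar>?f (\<omega>, r)\<bar> \<le> BG" for \<omega> r
        using Gf_b[of t \<omega> r] BG0 by (auto simp: indicator_def)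
      have fz: "?f (\<omega>, r) = 0" if "r \<notin> {0..t}" for \<omega> r using that by simp
      from fubini_gen[OF P_fin fm fb fz] show ?thesis by simp
    qed
    also have "\<dots> = (\<integral>r. ptf p r gf x * indicator {0..t} r \<partial>lborel)"
    proof (intro Bochner_Integration.integral_cong refl)
      fix r
      show "(\<integral>\<omega>. indicator {0..t} r * Gf t \<omega> r \<partial>P x) = ptf p r gf x * indicator {0..t} r"
      proof (cases "r \<in> {0..t}")
        case True
        then have r0: "0 \<le> r" by simp
        have "Gf t \<omega> r = gf (X r \<omega>)" for \<omega> unfolding Gf_def using True by simp
        moreover have "(\<integral>\<omega>. gf (X r \<omega>) \<partial>P x) = ptf p r gf x"
          by (rule expect_X[OF r0 gf_meas, where C=BG]) (simp add: BG_def gf_b)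
        ultimately show ?thesis using True by simp
      qed simp
    qed
    finally show ?thesis .
  qed
  also have "ptf p t vef x - (\<integral>r. ptf p r gf x * indicator {0..t} r \<partial>lborel) = vef x"
    using K1[OF t, of x] by (simp add: mult.commute)
  finally show ?thesis .
qed

end

theorem corollary2p6:
  fixes m :: "'a::topological_space measure"
    and p :: "real \<Rightarrow> 'a \<Rightarrow> 'a measure"
    and \<Omega> :: "'w set" and F :: "real \<Rightarrow> 'w measure"
    and X :: "real \<Rightarrow> 'w \<Rightarrow> 'a" and P :: "'a \<Rightarrow> 'w measure"
    and u :: "'a \<Rightarrow> real" and \<eta> t0 \<epsilon> :: real
  assumes lusin: "lusin_space TYPE('a)"
    and m: "sigma_finite_measure m" "sets m = sets borel"
    and p: "transition_function p"
    and X: "markov_process p \<Omega> F X P"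
    and u: "u \<in> Dset m"
    and eta: "\<eta> \<ge> 0" and t0: "t0 > 0" and eps: "\<epsilon> > 0"
  defines "ut \<equiv> ptf p \<eta> u"
  defines "v \<equiv> (\<lambda>x. (1 / t0) * (\<integral>s\<in>{0..t0}. ptf p s ut x \<partial>lborel))"
  defines "v\<epsilon> \<equiv> (\<lambda>x. v x + \<epsilon>)"
  defines "V\<epsilon> \<equiv> (\<lambda>x. (1 / v\<epsilon> x) * ((ptf p t0 ut x - ut x) / t0))"
  shows "\<forall>t>0. \<forall>x. v\<epsilon> x =
           (\<integral>\<omega>. v\<epsilon> (X t \<omega>) * exp (- (\<integral>s\<in>{0..t}. V\<epsilon> (X s \<omega>) \<partial>lborel)) \<partial>P x)"
proof (intro allI impI)
  fix t :: real and x :: 'a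
  assume t: "t > 0"
  interpret fk p \<Omega> F X P using p X by (rule fk.intro)
  have um: "u \<in> borel_measurable borel" and ub: "bounded (range u)" and upos: "\<And>x. 0 \<le> u x"
    using u unfolding Dset_def by auto
  obtain Bu where Bu: "\<And>x. \<bar>u x\<bar> \<le> Bu"
    using ub unfolding bounded_iff by auto
  have utm: "ut \<in> borel_measurable borel" unfolding ut_def by (rule ptf_meas[OF eta um])
  have utb: "\<And>y. \<bar>ut y\<bar> \<le> Bu" unfolding ut_def by (rule ptf_bound[OF eta um Bu])
  have utpos: "\<And>y. 0 \<le> ut y" unfolding ut_def ptf_def using upos by (simp add: integral_nonneg_AE)
  interpret K: fkm p \<Omega> F X P ut Bu t0 \<epsilon>
    by (rule fkm.intro[OF fk_axioms], unfold_locales) (use utm utb utpos t0 eps in auto)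
  have ve: "v\<epsilon> = K.vef"
    by (rule ext) (simp add: v\<epsilon>_def v_def K.vef_def K.vf_def set_lebesgue_integral_def)
  have Ve: "V\<epsilon> = K.Vf"
    by (rule ext) (simp add: V\<epsilon>_def ve K.Vf_def K.gf_def)
  have A: "(\<integral>s\<in>{0..t}. V\<epsilon> (X s \<omega>) \<partial>lborel) = K.Af t \<omega> t" for \<omega>
    unfolding set_lebesgue_integral_def K.Af_def K.Hf_def Ve
    by (intro Bochner_Integration.integral_cong) (auto simp: indicator_def)
  show "v\<epsilon> x = (\<integral>\<omega>. v\<epsilon> (X t \<omega>) * exp (- (\<integral>s\<in>{0..t}. V\<epsilon> (X s \<omega>) \<partial>lborel)) \<partial>P x)"
    unfolding A using K.main_fk[of t x] t by (simp add: ve)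
qed

end
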